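(* Fix $k\ge2$, $\eta\in[0,1)$ and $0<c<c_k(\eta)$, where $c_k(\eta)=\left(\frac{e}{(1-\eta)(k-1)}\right)^{\frac1{k-1}}$. For any sequence $G_n=(V_n,E_n)$ of asymptotically tree-like $k$-uniform hypergraphs, for $n$ large enough there exists $\zeta=\zeta(n,c,\eta)\in(0,1]$ with $\limsup_n\zeta(k-1)c^{k-1}<e$ such that $$(1-\zeta)\sum_{e\in E_n}\prod_{u\in e}x_u^\ast=(1+o(1))\,\eta c^k|E_n|,$$ where $\mathbf x^\ast=\mathbf x^\ast(c,\zeta)$ is the unique fixed point of $F^{G_n}_{c,\zeta}$ in $[0,c]^{V_n}$. If in addition $(G_n)$ is approximately regular, the same conclusion holds under the weaker assumption $0<c<\overline c_k(\eta)$.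
   Context: Hypergraphs are simple. For a hypergraph $G$ and $S\subseteq V(G)$, $d_G(S)=|\{e\in E(G):S\subseteq e\}|$, $\Delta_\ell(G)=\max_{|S|=\ell}d_G(S)$, $\Delta(G)=\Delta_1(G)$ the maximum degree, $\delta(G)$ the minimum degree, and $\Gamma(G)$ is the maximum over distinct $v,v'$ of the number of $(k-1)$-sets $S$ with $S\cup\{v\},S\cup\{v'\}\in E(G)$. A sequence $(G_n)$ of $k$-uniform hypergraphs is asymptotically tree-like if, with $G=G_n$, $\Delta=\Delta(G)$, as $n\to\infty$: (1) $\Delta\to\infty$; (2) $\Delta_\ell(G)=o(\Delta^{\frac{k-\ell}{k-1}})$ for each $\ell\in\{2,\dots,k-1\}$; (3) $\Gamma(G)=o(\Delta)$; (4) $|E(G)|/|V(G)|=\Omega(\Delta)$. It is approximately regular if also $\delta(G)=(1-o(1))\Delta(G)$. For a $k$-uniform hypergraph $G=(V,E)$ with maximum degree $\Delta$, $(F^G_{c,\zeta}(\mathbf x))_v=c\exp\left(-\frac{\zeta}{\Delta}\sum_{e\ni v}\prod_{u\in e\setminus\{v\}}x_u\right)$; when $\limsup_n\zeta(k-1)c^{k-1}<e$ it has a unique fixed point in $[0,c]^V$ for large $n$. $\eta_k^\ast=e^{-k/(k-1)}$; $\overline c_k(\eta)=\left(\frac{e}{(k-1)(1-\eta/\eta_k^\ast)}\right)^{\frac1{k-1}}$ if $\eta<\eta_k^\ast$ and $+\infty$ otherwise. *)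

theory Defs
  imports "HOL-Analysis.Analysis" "HOL-Library.Landau_Symbols" "HOL-Library.Liminf_Limsup"
    "HOL-Library.FuncSet"
begin

definition uniform_hypergraph :: "nat \<Rightarrow> 'a set \<Rightarrow> 'a set set \<Rightarrow> bool" where
  "uniform_hypergraph k V E \<longleftrightarrow> finite V \<and> (\<forall>e\<in>E. e \<subseteq> V \<and> card e = k)"

definition hdeg :: "'a set set \<Rightarrow> 'a set \<Rightarrow> nat" where
  "hdeg E S = card {e \<in> E. S \<subseteq> e}"

definition maxcodeg :: "'a set \<Rightarrow> 'a set set \<Rightarrow> nat \<Rightarrow> nat" where
  "maxcodeg V E l = Max ({hdeg E S | S. S \<subseteq> V \<and> card S = l} \<union> {0})"

definition maxdeg :: "'a set \<Rightarrow> 'a set set \<Rightarrow> nat" where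
  "maxdeg V E = maxcodeg V E 1"

definition mindeg :: "'a set \<Rightarrow> 'a set set \<Rightarrow> nat" where
  "mindeg V E = Min ({hdeg E {v} | v. v \<in> V} \<union> (if V = {} then {0} else {}))"

definition Gamma_hg :: "nat \<Rightarrow> 'a set \<Rightarrow> 'a set set \<Rightarrow> nat" where
  "Gamma_hg k V E = Max ({card {S. card S = k - 1 \<and> S \<union> {v} \<in> E \<and> S \<union> {v'} \<in> E}
       | v v'. v \<in> V \<and> v' \<in> V \<and> v \<noteq> v'} \<union> {0})"

definition asymp_tree_like :: "nat \<Rightarrow> (nat \<Rightarrow> 'a set) \<Rightarrow> (nat \<Rightarrow> 'a set set) \<Rightarrow> bool" where
  "asymp_tree_like k V E \<longleftrightarrow>
     (\<forall>n. uniform_hypergraph k (V n) (E n)) \<and>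
     filterlim (\<lambda>n. real (maxdeg (V n) (E n))) at_top sequentially \<and>
     (\<forall>l\<in>{2..k-1}. (\<lambda>n. real (maxcodeg (V n) (E n) l))
         \<in> o(\<lambda>n. real (maxdeg (V n) (E n)) powr ((real k - real l) / (real k - 1)))) \<and>
     (\<lambda>n. real (Gamma_hg k (V n) (E n))) \<in> o(\<lambda>n. real (maxdeg (V n) (E n))) \<and>
     (\<lambda>n. real (card (E n)) / real (card (V n))) \<in> \<Omega>(\<lambda>n. real (maxdeg (V n) (E n)))"

definition approx_regular :: "nat \<Rightarrow> (nat \<Rightarrow> 'a set) \<Rightarrow> (nat \<Rightarrow> 'a set set) \<Rightarrow> bool" where
  "approx_regular k V E \<longleftrightarrow> asymp_tree_like k V E \<and>
     ((\<lambda>n. real (mindeg (V n) (E n)) / real (maxdeg (V n) (E n))) \<longlonglongrightarrow> 1)"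

definition Fmap :: "'a set set \<Rightarrow> nat \<Rightarrow> real \<Rightarrow> real \<Rightarrow> ('a \<Rightarrow> real) \<Rightarrow> 'a \<Rightarrow> real" where
  "Fmap E D c \<zeta> x v = c * exp (- (\<zeta> / real D) * (\<Sum>e\<in>{e\<in>E. v \<in> e}. \<Prod>u\<in>e - {v}. x u))"

definition fixpoints :: "'a set \<Rightarrow> 'a set set \<Rightarrow> real \<Rightarrow> real \<Rightarrow> ('a \<Rightarrow> real) set" where
  "fixpoints V E c \<zeta> = {x \<in> V \<rightarrow>\<^sub>E {0..c}. \<forall>v\<in>V. x v = Fmap E (maxdeg V E) c \<zeta> x v}"

definition eta_star :: "nat \<Rightarrow> real" where
  "eta_star k = exp (- real k / (real k - 1))"

definition c_k :: "nat \<Rightarrow> real \<Rightarrow> real" where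
  "c_k k \<eta> = (exp 1 / ((1 - \<eta>) * (real k - 1))) powr (1 / (real k - 1))"

definition cbar_k :: "nat \<Rightarrow> real \<Rightarrow> ereal" where
  "cbar_k k \<eta> = (if \<eta> < eta_star k
      then ereal ((exp 1 / ((real k - 1) * (1 - \<eta> / eta_star k))) powr (1 / (real k - 1)))
      else \<infinity>)"

end

theory Submission
  imports Defs
begin


lemma xexp_le: "(y::real) * exp (- y) \<le> 1 / exp 1"
proof -
  have "1 + (y - 1) \<le> exp (y - 1)" by (rule exp_ge_add_one_self)
  hence "y \<le> exp y / exp 1" by (simp add: exp_diff)
  hence "y * exp (-y) \<le> exp y / exp 1 * exp (-y)" by (rule mult_right_mono) auto
  also have "\<dots> = 1 / exp 1" by (simp add: exp_minus field_simps)
  finally show ?thesis .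
qed

lemma key_ineq:
  fixes W Z :: real
  assumes "0 \<le> W" "0 \<le> Z"
  shows "exp (- (exp (-W) * Z)) - exp (- Z) \<le> W / exp 1"
proof (cases "Z = 0 \<or> W = 0")
  case True then show ?thesis using assms by auto
next
  case False
  hence Z: "Z > 0" and W: "W > 0" using assms by auto
  define f where "f = (\<lambda>t::real. - exp (- exp t))"
  have der: "DERIV f t :> exp t * exp (- exp t)" for t
    unfolding f_def by (auto intro!: derivative_eq_intros)
  obtain z where "f (ln Z) - f (ln Z - W) = (ln Z - (ln Z - W)) * (exp z * exp (- exp z))"
    using MVT2[of "ln Z - W" "ln Z" f "\<lambda>t. exp t * exp (- exp t)"] W der by auto
  moreover have "f (ln Z) - f (ln Z - W) = exp (- (exp (-W) * Z)) - exp (- Z)"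
    using Z unfolding f_def by (simp add: exp_diff exp_minus field_simps)
  moreover have "exp z * exp (- exp z) \<le> 1 / exp 1" by (rule xexp_le)
  ultimately show ?thesis using W by (simp add: mult_left_mono divide_simps)
qed

definition Bdg :: "nat \<Rightarrow> real \<Rightarrow> real \<Rightarrow> real \<Rightarrow> real" where
  "Bdg k c \<zeta> \<delta> = (2 * \<delta> + \<zeta> * c ^ (k - 1) * (exp (real (k - 1) * \<delta>) - exp (- (real (k - 1) * \<delta>))))
      / (1 - real (k - 1) * \<zeta> * c ^ (k - 1) / exp 1)"

locale hg =
  fixes V :: "'a set" and E :: "'a set set" and k :: nat and c :: real
  assumes finV: "finite V" and edges: "\<And>e. e \<in> E \<Longrightarrow> e \<subseteq> V \<and> card e = k"
    and k2: "k \<ge> 2" and cpos: "c > 0" and Dpos: "maxdeg V E > 0"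
begin

abbreviation D where "D \<equiv> maxdeg V E"

definition A :: "('a \<Rightarrow> real) \<Rightarrow> 'a \<Rightarrow> real" where
  "A x v = (\<Sum>e\<in>{e\<in>E. v \<in> e}. \<Prod>u\<in>e - {v}. x u)"

lemma F_eq: "Fmap E D c \<zeta> x v = c * exp (- (\<zeta> / real D) * A x v)"
  unfolding Fmap_def A_def by simp

lemma finE: "finite E"
proof -
  have "E \<subseteq> Pow V" using edges by auto
  moreover have "finite (Pow V)" using finV by simp
  ultimately show ?thesis by (rule finite_subset)
qed

lemma hdeg_single: "hdeg E {v} = card {e\<in>E. v \<in> e}"
  unfolding hdeg_def by simp

lemma deg_le: assumes "v \<in> V" shows "card {e\<in>E. v \<in> e} \<le> D"
proof -
  have fin: "finite ({hdeg E S | S. S \<subseteq> V \<and> card S = 1} \<union> {0})"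
  proof -
    have "{hdeg E S | S. S \<subseteq> V \<and> card S = 1} \<subseteq> hdeg E ` Pow V" by auto
    moreover have "finite (hdeg E ` Pow V)" using finV by simp
    ultimately have "finite {hdeg E S | S. S \<subseteq> V \<and> card S = 1}" by (rule finite_subset)
    thus ?thesis by simp
  qed
  have "hdeg E {v} \<in> {hdeg E S | S. S \<subseteq> V \<and> card S = 1} \<union> {0}" using assms by force
  hence "hdeg E {v} \<le> Max ({hdeg E S | S. S \<subseteq> V \<and> card S = 1} \<union> {0})"
    by (rule Max_ge[OF fin])
  thus ?thesis unfolding maxdeg_def maxcodeg_def hdeg_single .
qed


lemma card_edge[simp]: "e \<in> E \<Longrightarrow> card e = k"
  using edges by blast

lemma fin_edge: assumes "e \<in> E" shows "finite e"
proof -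
  have "e \<subseteq> V" using edges assms by blast
  thus ?thesis using finV by (rule finite_subset)
qed

lemma card_minus: assumes "e \<in> E" "v \<in> e" shows "card (e - {v}) = k - 1"
  using fin_edge[OF assms(1)] assms by (simp add: card_Diff_singleton)

lemma A_nonneg: assumes "\<And>u. u \<in> V \<Longrightarrow> 0 \<le> x u" shows "0 \<le> A x v"
  unfolding A_def
proof (intro sum_nonneg prod_nonneg)
  fix e u assume "e \<in> {e \<in> E. v \<in> e}" "u \<in> e - {v}"
  thus "0 \<le> x u" using edges assms by blast
qed

lemma A_mono: assumes "\<And>u. u \<in> V \<Longrightarrow> 0 \<le> x u \<and> x u \<le> y u" shows "A x v \<le> A y v"
  unfolding A_def
proof (rule sum_mono)
  fix e assume "e \<in> {e \<in> E. v \<in> e}"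
  hence "e \<subseteq> V" using edges by auto
  thus "(\<Prod>u\<in>e - {v}. x u) \<le> (\<Prod>u\<in>e - {v}. y u)"
    using assms by (intro prod_mono) auto
qed

lemma A_le: assumes "v \<in> V" "0 \<le> b" "\<And>u. u \<in> V \<Longrightarrow> 0 \<le> x u \<and> x u \<le> b"
  shows "A x v \<le> real D * b ^ (k - 1)"
proof -
  have "A x v \<le> (\<Sum>e\<in>{e\<in>E. v \<in> e}. b ^ (k - 1))"
    unfolding A_def
  proof (rule sum_mono)
    fix e assume e: "e \<in> {e\<in>E. v \<in> e}"
    have "e \<subseteq> V" using e edges by auto
    hence "(\<Prod>u\<in>e - {v}. x u) \<le> (\<Prod>u\<in>e - {v}. b)"
      using assms(3) by (intro prod_mono) auto
    also have "\<dots> = b ^ (k - 1)" using e card_minus by simp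
    finally show "(\<Prod>u\<in>e - {v}. x u) \<le> b ^ (k - 1)" .
  qed
  also have "\<dots> = real (card {e\<in>E. v \<in> e}) * b ^ (k - 1)" by simp
  also have "\<dots> \<le> real D * b ^ (k - 1)"
    using deg_le[OF assms(1)] assms(2) by (intro mult_right_mono) auto
  finally show ?thesis .
qed

lemma A_scale: assumes "0 \<le> l" "\<And>u. u \<in> V \<Longrightarrow> 0 \<le> p u \<and> l * p u \<le> q u"
  shows "l ^ (k - 1) * A p v \<le> A q v"
proof -
  have "l ^ (k - 1) * A p v = (\<Sum>e\<in>{e\<in>E. v \<in> e}. \<Prod>u\<in>e - {v}. l * p u)"
    unfolding A_def sum_distrib_left
    by (intro sum.cong refl) (simp add: prod.distrib)
  also have "\<dots> \<le> A q v" unfolding A_def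
  proof (rule sum_mono)
    fix e assume "e \<in> {e \<in> E. v \<in> e}"
    hence "e \<subseteq> V" using edges by auto
    thus "(\<Prod>u\<in>e - {v}. l * p u) \<le> (\<Prod>u\<in>e - {v}. q u)"
      using assms by (intro prod_mono) (auto intro: mult_nonneg_nonneg)
  qed
  finally show ?thesis .
qed

lemma A_const: "A (\<lambda>_. y) v = real (card {e\<in>E. v \<in> e}) * y ^ (k - 1)"
  unfolding A_def by (simp add: card_minus)

lemma F_pos: "0 < Fmap E D c \<zeta> x v"
  unfolding F_eq using cpos by simp

lemma F_le: assumes "0 \<le> \<zeta>" "\<And>u. u \<in> V \<Longrightarrow> 0 \<le> x u" shows "Fmap E D c \<zeta> x v \<le> c"
proof -
  have "0 \<le> \<zeta> / real D * A x v" using assms A_nonneg by simp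
  thus ?thesis unfolding F_eq using cpos by simp
qed

lemma F_anti: assumes "0 \<le> \<zeta>" "\<And>u. u \<in> V \<Longrightarrow> 0 \<le> x u \<and> x u \<le> y u"
  shows "Fmap E D c \<zeta> y v \<le> Fmap E D c \<zeta> x v"
proof -
  have "\<zeta> / real D * A x v \<le> \<zeta> / real D * A y v"
    using assms A_mono by (intro mult_left_mono) auto
  thus ?thesis unfolding F_eq using cpos by simp
qed

lemma F_lower: assumes "0 \<le> \<zeta>" "v \<in> V" "\<And>u. u \<in> V \<Longrightarrow> 0 \<le> x u \<and> x u \<le> c"
  shows "c * exp (- (\<zeta> * c ^ (k - 1))) \<le> Fmap E D c \<zeta> x v"
proof -
  have "A x v \<le> real D * c ^ (k - 1)" using A_le assms cpos by simp
  hence "\<zeta> / real D * A x v \<le> \<zeta> / real D * (real D * c ^ (k - 1))"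
    using assms(1) by (intro mult_left_mono) auto
  also have "\<dots> = \<zeta> * c ^ (k - 1)" using Dpos by simp
  finally have "\<zeta> / real D * A x v \<le> \<zeta> * c ^ (k - 1)" .
  thus ?thesis unfolding F_eq using cpos by simp
qed

lemma prod_exp_F:
  assumes "e \<in> E" "v \<in> e"
  shows "(\<Prod>w\<in>e - {v}. exp a * Fmap E D c \<zeta> q w)
       = exp (real (k - 1) * a) * c ^ (k - 1) * exp (- (\<Sum>w\<in>e - {v}. \<zeta> / real D * A q w))"
proof -
  have fin: "finite (e - {v})" using fin_edge[OF assms(1)] by simp
  have "(\<Prod>w\<in>e - {v}. exp a * Fmap E D c \<zeta> q w)
      = (\<Prod>w\<in>e - {v}. exp a * c * exp (- (\<zeta> / real D * A q w)))"
    by (simp add: F_eq mult.assoc)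
  also have "\<dots> = (\<Prod>w\<in>e - {v}. exp a) * (\<Prod>w\<in>e - {v}. c) * (\<Prod>w\<in>e - {v}. exp (- (\<zeta> / real D * A q w)))"
    by (simp only: prod.distrib)
  also have "(\<Prod>w\<in>e - {v}. exp a) = exp a ^ (k - 1)" using card_minus[OF assms] by simp
  also have "exp a ^ (k - 1) = exp (real (k - 1) * a)" by (simp add: exp_of_nat_mult)
  also have "(\<Prod>w\<in>e - {v}. c) = c ^ (k - 1)" using card_minus[OF assms] by simp
  also have "(\<Prod>w\<in>e - {v}. exp (- (\<zeta> / real D * A q w))) = exp (- (\<Sum>w\<in>e - {v}. \<zeta> / real D * A q w))"
    by (simp only: sum_negf[symmetric] exp_sum[OF fin])
  finally show ?thesis .
qed

lemma two_step:
  assumes z: "0 \<le> \<zeta>" "0 \<le> U" "0 \<le> \<delta>"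
  and pq: "\<And>w. w \<in> V \<Longrightarrow> 0 \<le> p w \<and> 0 \<le> q w \<and> p w \<le> q w * exp U"
  and p'q': "\<And>w. w \<in> V \<Longrightarrow> 0 \<le> p' w \<and> p' w \<le> exp \<delta> * Fmap E D c \<zeta> q w \<and> exp (- \<delta>) * Fmap E D c \<zeta> p w \<le> q' w"
  and p''q'': "p'' \<le> exp \<delta> * Fmap E D c \<zeta> q' v" "exp (- \<delta>) * Fmap E D c \<zeta> p' v \<le> q''"
  and v: "v \<in> V"
  shows "p'' \<le> q'' * exp (2 * \<delta> + \<zeta> * c ^ (k - 1) * (real (k - 1) * U / exp 1
              + (exp (real (k - 1) * \<delta>) - exp (- (real (k - 1) * \<delta>)))))"
proof -
  define \<gamma> where "\<gamma> = real (k - 1) * \<delta>"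
  define K where "K = real (k - 1) * U / exp 1 + (exp \<gamma> - exp (- \<gamma>))"
  have g0: "0 \<le> \<gamma>" using z unfolding \<gamma>_def by simp
  have K0: "0 \<le> K" unfolding K_def using g0 z by (intro add_nonneg_nonneg) auto
  have edge: "(\<Prod>u\<in>e - {v}. p' u) - (\<Prod>u\<in>e - {v}. q' u) \<le> c ^ (k - 1) * K"
    if e: "e \<in> E" "v \<in> e" for e
  proof -
    have eV: "e \<subseteq> V" using edges e by blast
    define Z where "Z = (\<Sum>w\<in>e - {v}. \<zeta> / real D * A p w)"
    define Zq where "Zq = (\<Sum>w\<in>e - {v}. \<zeta> / real D * A q w)"
    define a where "a = exp (- (real (k - 1) * U))"
    have Z0: "0 \<le> Z" unfolding Z_def using pq eV z
      by (intro sum_nonneg mult_nonneg_nonneg divide_nonneg_nonneg A_nonneg) auto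
    have "a * Z \<le> Zq"
    proof -
      have "a * Z = (\<Sum>w\<in>e - {v}. \<zeta> / real D * (exp (- U) ^ (k - 1) * A p w))"
        unfolding Z_def a_def sum_distrib_left
        by (intro sum.cong refl) (simp add: exp_of_nat_mult[symmetric] algebra_simps)
      also have "\<dots> \<le> Zq" unfolding Zq_def
      proof (intro sum_mono mult_left_mono)
        fix w
        show "exp (- U) ^ (k - 1) * A p w \<le> A q w"
        proof (rule A_scale)
          fix u assume u: "u \<in> V"
          have "p u \<le> q u * exp U" using pq u by blast
          hence "exp (- U) * p u \<le> exp (-U) * (q u * exp U)" by (intro mult_left_mono) auto
          also have "\<dots> = q u" by (simp add: exp_minus field_simps)
          finally show "0 \<le> p u \<and> exp (- U) * p u \<le> q u" using pq u by blast
        qed simp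
        show "0 \<le> \<zeta> / real D" using z by simp
      qed
      finally show ?thesis .
    qed
    have h1: "(\<Prod>u\<in>e - {v}. p' u) \<le> exp \<gamma> * c ^ (k - 1) * exp (- Zq)"
    proof -
      have "(\<Prod>u\<in>e - {v}. p' u) \<le> (\<Prod>w\<in>e - {v}. exp \<delta> * Fmap E D c \<zeta> q w)"
        using p'q' eV by (intro prod_mono) auto
      also have "\<dots> = exp \<gamma> * c ^ (k - 1) * exp (- Zq)"
        unfolding prod_exp_F[OF e] \<gamma>_def Zq_def by simp
      finally show ?thesis .
    qed
    have h2: "exp (- \<gamma>) * c ^ (k - 1) * exp (- Z) \<le> (\<Prod>u\<in>e - {v}. q' u)"
    proof -
      have "exp (- \<gamma>) * c ^ (k - 1) * exp (- Z) = (\<Prod>w\<in>e - {v}. exp (- \<delta>) * Fmap E D c \<zeta> p w)"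
        unfolding prod_exp_F[OF e] \<gamma>_def Z_def by simp
      also have "\<dots> \<le> (\<Prod>u\<in>e - {v}. q' u)"
        using p'q' eV F_pos by (intro prod_mono) (auto intro: less_imp_le)
      finally show ?thesis .
    qed
    have h3: "exp (- Zq) \<le> exp (- (a * Z))" using \<open>a * Z \<le> Zq\<close> by simp
    have key: "exp (- (a * Z)) - exp (- Z) \<le> real (k - 1) * U / exp 1"
      using key_ineq[of "real (k - 1) * U" Z] z Z0 unfolding a_def by simp
    have X1: "exp (- (a * Z)) \<le> 1" unfolding a_def using Z0 by simp
    have Y1: "exp (- Z) \<le> 1" using Z0 by simp
    have "exp \<gamma> * exp (- (a * Z)) - exp (- \<gamma>) * exp (- Z)
        = (exp (- (a * Z)) - exp (- Z)) + (exp \<gamma> - 1) * exp (- (a * Z)) + (1 - exp (- \<gamma>)) * exp (- Z)"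
      by (simp add: algebra_simps)
    also have "\<dots> \<le> (exp (- (a * Z)) - exp (- Z)) + (exp \<gamma> - 1) * 1 + (1 - exp (- \<gamma>)) * 1"
      using X1 Y1 g0 by (intro add_mono mult_left_mono) auto
    also have "\<dots> \<le> K" unfolding K_def using key by simp
    finally have main: "exp \<gamma> * exp (- (a * Z)) - exp (- \<gamma>) * exp (- Z) \<le> K" .
    have cpos': "0 \<le> c ^ (k - 1)" using cpos by simp
    have "(\<Prod>u\<in>e - {v}. p' u) - (\<Prod>u\<in>e - {v}. q' u)
         \<le> exp \<gamma> * c ^ (k - 1) * exp (- (a * Z)) - exp (- \<gamma>) * c ^ (k - 1) * exp (- Z)"
    proof -
      have "exp \<gamma> * c ^ (k - 1) * exp (- Zq) \<le> exp \<gamma> * c ^ (k - 1) * exp (- (a * Z))"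
        using h3 cpos' by (intro mult_left_mono) auto
      thus ?thesis using h1 h2 by linarith
    qed
    also have "\<dots> = c ^ (k - 1) * (exp \<gamma> * exp (- (a * Z)) - exp (- \<gamma>) * exp (- Z))"
      by (simp add: algebra_simps)
    also have "\<dots> \<le> c ^ (k - 1) * K" using main cpos' by (intro mult_left_mono) auto
    finally show ?thesis .
  qed
  have "A p' v - A q' v = (\<Sum>e\<in>{e\<in>E. v \<in> e}. (\<Prod>u\<in>e - {v}. p' u) - (\<Prod>u\<in>e - {v}. q' u))"
    unfolding A_def by (simp add: sum_subtractf)
  also have "\<dots> \<le> (\<Sum>e\<in>{e\<in>E. v \<in> e}. c ^ (k - 1) * K)"
    using edge by (intro sum_mono) auto
  also have "\<dots> = real (card {e\<in>E. v \<in> e}) * (c ^ (k - 1) * K)" by simp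
  also have "\<dots> \<le> real D * (c ^ (k - 1) * K)"
    using deg_le[OF v] K0 cpos by (intro mult_right_mono) auto
  finally have diff: "A p' v - A q' v \<le> real D * (c ^ (k - 1) * K)" .
  have diff2: "\<zeta> / real D * A p' v - \<zeta> / real D * A q' v \<le> \<zeta> * c ^ (k - 1) * K"
  proof -
    have "\<zeta> / real D * A p' v - \<zeta> / real D * A q' v = \<zeta> / real D * (A p' v - A q' v)"
      by (simp add: algebra_simps)
    also have "\<dots> \<le> \<zeta> / real D * (real D * (c ^ (k - 1) * K))"
      using diff z by (intro mult_left_mono) auto
    also have "\<dots> = \<zeta> * c ^ (k - 1) * K" using Dpos by simp
    finally show ?thesis .
  qed
  have q''pos: "0 \<le> q''"
    using p''q''(2) F_pos[of \<zeta> p' v] by (meson exp_gt_zero less_imp_le mult_pos_pos order_trans)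
  have "p'' \<le> exp \<delta> * (c * exp (- (\<zeta> / real D * A q' v)))"
    using p''q''(1) by (simp add: F_eq)
  also have "\<dots> = exp (- \<delta>) * (c * exp (- (\<zeta> / real D * A p' v)))
        * exp (2 * \<delta> + (\<zeta> / real D * A p' v - \<zeta> / real D * A q' v))"
  proof -
    have "exp (- \<delta>) * exp (- (\<zeta> / real D * A p' v)) * exp (2 * \<delta> + (\<zeta> / real D * A p' v - \<zeta> / real D * A q' v))
       = exp \<delta> * exp (- (\<zeta> / real D * A q' v))"
      by (simp add: mult_exp_exp)
    thus ?thesis by (simp add: algebra_simps)
  qed
  also have "\<dots> \<le> q'' * exp (2 * \<delta> + (\<zeta> / real D * A p' v - \<zeta> / real D * A q' v))"
    using p''q''(2) by (intro mult_right_mono) (auto simp: F_eq)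
  also have "\<dots> \<le> q'' * exp (2 * \<delta> + \<zeta> * c ^ (k - 1) * K)"
    using diff2 q''pos by (intro mult_left_mono) auto
  finally show ?thesis unfolding K_def \<gamma>_def .
qed

abbreviation Bd where "Bd \<equiv> Bdg k c"

lemmas Bd_def = Bdg_def[of k c]

lemma Bd0: "Bd \<zeta> 0 = 0" unfolding Bd_def by simp

lemma perturb:
  assumes z: "0 \<le> \<zeta>" "0 \<le> \<delta>" and th: "real (k - 1) * \<zeta> * c ^ (k - 1) < exp 1"
  and pos: "\<And>w. w \<in> V \<Longrightarrow> 0 < p w \<and> 0 < q w"
  and hyp: "\<And>w. w \<in> V \<Longrightarrow> p w \<le> exp \<delta> * Fmap E D c \<zeta> q w \<and> exp (- \<delta>) * Fmap E D c \<zeta> p w \<le> q w"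
  and v: "v \<in> V"
  shows "p v \<le> q v * exp (Bd \<zeta> \<delta>)"
proof -
  define U where "U = Max ((\<lambda>w. ln (p w / q w)) ` V \<union> {0})"
  have finU: "finite ((\<lambda>w. ln (p w / q w)) ` V \<union> {0})" using finV by simp
  have U0: "0 \<le> U" unfolding U_def using finU by (intro Max_ge) auto
  have lnU: "ln (p w / q w) \<le> U" if "w \<in> V" for w
    unfolding U_def using finU that by (intro Max_ge) auto
  have pU: "p w \<le> q w * exp U" if w: "w \<in> V" for w
  proof -
    have "p w / q w = exp (ln (p w / q w))" using pos[OF w] by simp
    also have "\<dots> \<le> exp U" using lnU[OF w] by simp
    finally show ?thesis using pos[OF w] by (simp add: divide_simps mult.commute)
  qed
  define s where "s = \<zeta> * c ^ (k - 1)"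
  define \<theta> where "\<theta> = real (k - 1) * s / exp 1"
  define \<eta> where "\<eta> = exp (real (k - 1) * \<delta>) - exp (- (real (k - 1) * \<delta>))"
  have eta0: "0 \<le> \<eta>" unfolding \<eta>_def using z by simp
  have s0: "0 \<le> s" unfolding s_def using z cpos by simp
  have th1: "\<theta> < 1" using th unfolding \<theta>_def s_def by (simp add: divide_simps mult.assoc)
  define R where "R = 2 * \<delta> + s * (real (k - 1) * U / exp 1 + \<eta>)"
  have R0: "0 \<le> R" unfolding R_def using z s0 U0 eta0 by (intro add_nonneg_nonneg mult_nonneg_nonneg) auto
  have all: "p w \<le> q w * exp R" if w: "w \<in> V" for w
    unfolding R_def s_def \<eta>_def
  proof (rule two_step[where p = p and q = q and p' = p and q' = q])
    show "0 \<le> \<zeta>" "0 \<le> U" "0 \<le> \<delta>" using z U0 by auto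
    show "0 \<le> p u \<and> 0 \<le> q u \<and> p u \<le> q u * exp U" if "u \<in> V" for u
      using pos[OF that] pU[OF that] by auto
    show "0 \<le> p u \<and> p u \<le> exp \<delta> * Fmap E D c \<zeta> q u \<and> exp (- \<delta>) * Fmap E D c \<zeta> p u \<le> q u"
      if "u \<in> V" for u using pos[OF that] hyp[OF that] by auto
    show "p w \<le> exp \<delta> * Fmap E D c \<zeta> q w" "exp (- \<delta>) * Fmap E D c \<zeta> p w \<le> q w" using hyp[OF w] by auto
    show "w \<in> V" by fact
  qed
  have "U \<le> R"
  proof -
    have "x \<le> R" if "x \<in> (\<lambda>w. ln (p w / q w)) ` V \<union> {0}" for x
    proof -
      { fix w assume w: "w \<in> V"
        have "p w / q w \<le> exp R" using all[OF w] pos[OF w] by (simp add: divide_simps mult.commute)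
        hence "ln (p w / q w) \<le> ln (exp R)" using pos[OF w] by (subst ln_le_cancel_iff) auto
        hence "ln (p w / q w) \<le> R" by simp }
      thus ?thesis using that R0 by auto
    qed
    thus ?thesis unfolding U_def using finU by (intro Max.boundedI) auto
  qed
  hence "U \<le> 2 * \<delta> + \<theta> * U + s * \<eta>" unfolding R_def \<theta>_def by (simp add: algebra_simps)
  hence "U * (1 - \<theta>) \<le> 2 * \<delta> + s * \<eta>" by (simp add: algebra_simps)
  hence UB: "U \<le> Bd \<zeta> \<delta>" unfolding Bd_def using th1
    by (simp add: \<theta>_def s_def \<eta>_def pos_le_divide_eq mult.assoc)
  have "p v \<le> q v * exp U" by (rule pU[OF v])
  also have "\<dots> \<le> q v * exp (Bd \<zeta> \<delta>)" using UB pos[OF v] by simp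
  finally show ?thesis .
qed

lemma fp_props: assumes "x \<in> fixpoints V E c \<zeta>" "v \<in> V"
  shows "0 < x v" "x v \<le> c" "x v = Fmap E D c \<zeta> x v"
proof -
  show eq: "x v = Fmap E D c \<zeta> x v" using assms unfolding fixpoints_def by auto
  show "0 < x v" using F_pos eq by simp
  have "x \<in> V \<rightarrow>\<^sub>E {0..c}" using assms unfolding fixpoints_def by auto
  hence "x v \<in> {0..c}" using assms(2) by (rule PiE_mem)
  thus "x v \<le> c" by simp
qed

lemma fp_unique:
  assumes z: "0 \<le> \<zeta>" and th: "real (k - 1) * \<zeta> * c ^ (k - 1) < exp 1"
  and x: "x \<in> fixpoints V E c \<zeta>" and y: "y \<in> fixpoints V E c \<zeta>"
  shows "x = y"
proof (rule PiE_ext)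
  show "x \<in> V \<rightarrow>\<^sub>E {0..c}" "y \<in> V \<rightarrow>\<^sub>E {0..c}" using x y unfolding fixpoints_def by auto
  fix v assume v: "v \<in> V"
  define p where "p = (\<lambda>w. max (x w) (y w))"
  define q where "q = (\<lambda>w. min (x w) (y w))"
  have "p v \<le> q v * exp (Bd \<zeta> 0)"
  proof (rule perturb[OF z order_refl th _ _ v])
    fix w assume w: "w \<in> V"
    show "0 < p w \<and> 0 < q w" unfolding p_def q_def using fp_props[OF x w] fp_props[OF y w] by auto
    have qx: "\<And>u. u \<in> V \<Longrightarrow> 0 \<le> q u \<and> q u \<le> x u" and qy: "\<And>u. u \<in> V \<Longrightarrow> 0 \<le> q u \<and> q u \<le> y u"
      unfolding q_def using fp_props[OF x] fp_props[OF y] by (auto intro: less_imp_le)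
    have xp: "\<And>u. u \<in> V \<Longrightarrow> 0 \<le> x u \<and> x u \<le> p u" and yp: "\<And>u. u \<in> V \<Longrightarrow> 0 \<le> y u \<and> y u \<le> p u"
      unfolding p_def using fp_props[OF x] fp_props[OF y] by (auto intro: less_imp_le)
    have "x w \<le> Fmap E D c \<zeta> q w" using fp_props(3)[OF x w] F_anti[OF z qx] by simp
    moreover have "y w \<le> Fmap E D c \<zeta> q w" using fp_props(3)[OF y w] F_anti[OF z qy] by simp
    moreover have "Fmap E D c \<zeta> p w \<le> x w" using fp_props(3)[OF x w] F_anti[OF z xp] by simp
    moreover have "Fmap E D c \<zeta> p w \<le> y w" using fp_props(3)[OF y w] F_anti[OF z yp] by simp
    ultimately show "p w \<le> exp 0 * Fmap E D c \<zeta> q w \<and> exp (- 0) * Fmap E D c \<zeta> p w \<le> q w"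
      unfolding p_def q_def by simp
  qed
  thus "x v = y v" unfolding p_def q_def Bd0 by simp
qed

lemma fp_exists:
  assumes z: "0 \<le> \<zeta>" and th: "real (k - 1) * \<zeta> * c ^ (k - 1) < exp 1"
  shows "\<exists>x. x \<in> fixpoints V E c \<zeta>"
proof -
  define G where "G = (\<lambda>x v. Fmap E D c \<zeta> x v)"
  define z where "z = (\<lambda>j. (G ^^ j) (\<lambda>_. c))"
  have zS: "z (Suc j) w = Fmap E D c \<zeta> (z j) w" for j w unfolding z_def G_def by simp
  have zS': "z n w = Fmap E D c \<zeta> (z m) w" if "n = Suc m" for n m w using zS that by simp
  have z0: "z 0 w = c" for w unfolding z_def by simp
  have zb: "0 < z j w \<and> z j w \<le> c" for j w
  proof (induction j arbitrary: w)
    case 0 thus ?case using z0 cpos by simp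
  next
    case (Suc j)
    have "Fmap E D c \<zeta> (z j) w \<le> c" using Suc.IH by (intro F_le z) (auto intro: less_imp_le)
    thus ?case using zS F_pos by simp
  qed
  have anti: "Fmap E D c \<zeta> y w \<le> Fmap E D c \<zeta> x w" if "\<And>u. u \<in> V \<Longrightarrow> x u \<le> y u" "x = z i" for x y w i
    using that zb by (intro F_anti z) (auto intro: less_imp_le)
  have A1: "\<forall>w\<in>V. z (2*j+1) w \<le> z (2*j) w" for j
  proof (induction j)
    case 0 show ?case using zb by (simp add: z0)
  next
    case (Suc j)
    have a: "\<forall>w\<in>V. z (2*j+1) w \<le> z (2*j+2) w"
    proof
      fix w assume w: "w \<in> V"
      have "z (2*j+1) w = Fmap E D c \<zeta> (z (2*j)) w" by (rule zS') simp
      also have "\<dots> \<le> Fmap E D c \<zeta> (z (2*j+1)) w" using Suc by (intro anti) auto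
      also have "\<dots> = z (2*j+2) w" by (rule zS'[symmetric]) simp
      finally show "z (2*j+1) w \<le> z (2*j+2) w" .
    qed
    show ?case
    proof
      fix w assume w: "w \<in> V"
      have "z (2*Suc j+1) w = Fmap E D c \<zeta> (z (2*j+2)) w" by (rule zS') simp
      also have "\<dots> \<le> Fmap E D c \<zeta> (z (2*j+1)) w" using a by (intro anti) auto
      also have "\<dots> = z (2*Suc j) w" by (rule zS'[symmetric]) simp
      finally show "z (2*Suc j+1) w \<le> z (2*Suc j) w" .
    qed
  qed
  have A2: "\<forall>w\<in>V. z (2*j+2) w \<le> z (2*j) w \<and> z (2*j+1) w \<le> z (2*j+3) w" for j
  proof (induction j)
    case 0
    have b: "\<forall>w\<in>V. z 2 w \<le> z 0 w" using zb z0 by simp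
    show ?case
    proof
      fix w assume w: "w \<in> V"
      have "z 1 w = Fmap E D c \<zeta> (z 0) w" using zS[of 0] by simp
      also have "\<dots> \<le> Fmap E D c \<zeta> (z 2) w" using b by (intro anti) auto
      also have "\<dots> = z 3 w" by (rule zS'[symmetric]) simp
      finally show "z (2*0+2) w \<le> z (2*0) w \<and> z (2*0+1) w \<le> z (2*0+3) w" using b w by (simp add: numeral_2_eq_2)
    qed
  next
    case (Suc j)
    show ?case
    proof
      fix w assume w: "w \<in> V"
      have "z (2*Suc j+2) w = Fmap E D c \<zeta> (z (2*j+3)) w" by (rule zS') simp
      also have "\<dots> \<le> Fmap E D c \<zeta> (z (2*j+1)) w" using Suc by (intro anti) auto
      also have "\<dots> = z (2*Suc j) w" by (rule zS'[symmetric]) simp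
      finally have h1: "z (2*Suc j+2) w \<le> z (2*Suc j) w" .
      have h1': "\<forall>u\<in>V. z (2*j+4) u \<le> z (2*j+2) u"
      proof
        fix u assume "u \<in> V"
        have "z (2*j+4) u = Fmap E D c \<zeta> (z (2*j+3)) u" by (rule zS') simp
        also have "\<dots> \<le> Fmap E D c \<zeta> (z (2*j+1)) u" using Suc by (intro anti) auto
        also have "\<dots> = z (2*j+2) u" by (rule zS'[symmetric]) simp
        finally show "z (2*j+4) u \<le> z (2*j+2) u" .
      qed
      have "z (2*Suc j+1) w = Fmap E D c \<zeta> (z (2*j+2)) w" by (rule zS') simp
      also have "\<dots> \<le> Fmap E D c \<zeta> (z (2*j+4)) w" using h1' by (intro anti) auto
      also have "\<dots> = z (2*Suc j+3) w" by (rule zS'[symmetric]) simp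
      finally show "z (2*Suc j+2) w \<le> z (2*Suc j) w \<and> z (2*Suc j+1) w \<le> z (2*Suc j+3) w" using h1 by simp
    qed
  qed
  define s where "s = \<zeta> * c ^ (k - 1)"
  define \<theta> where "\<theta> = real (k - 1) * s / exp 1"
  have s0: "0 \<le> s" unfolding s_def using z cpos by simp
  have th0: "0 \<le> \<theta>" unfolding \<theta>_def using s0 by simp
  have th1: "\<theta> < 1" using th unfolding \<theta>_def s_def by (simp add: divide_simps mult.assoc)
  have gap: "\<forall>w\<in>V. z (2*j) w \<le> z (2*j+1) w * exp (\<theta> ^ j * s)" for j
  proof (induction j)
    case 0
    show ?case
    proof
      fix w assume w: "w \<in> V"
      have "c * exp (- s) \<le> z 1 w" unfolding s_def using zS[of 0 w] F_lower[OF z w, of "z 0"] zb z0 cpos by simp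
      hence "c * exp (- s) * exp s \<le> z 1 w * exp s" by (intro mult_right_mono) auto
      thus "z (2*0) w \<le> z (2*0+1) w * exp (\<theta> ^ 0 * s)" using z0 by (simp add: mult.assoc exp_minus)
    qed
  next
    case (Suc j)
    show ?case
    proof
      fix w assume w: "w \<in> V"
      have "z (2*j+2) w \<le> z (2*j+3) w * exp (2 * 0 + \<zeta> * c ^ (k - 1) * (real (k - 1) * (\<theta> ^ j * s) / exp 1
              + (exp (real (k - 1) * 0) - exp (- (real (k - 1) * 0)))))"
      proof (rule two_step[where p = "z (2*j)" and q = "z (2*j+1)" and p' = "z (2*j+2)" and q' = "z (2*j+1)"])
        show "0 \<le> \<zeta>" "0 \<le> \<theta> ^ j * s" "(0::real) \<le> 0" using z th0 s0 by auto
        show "0 \<le> z (2 * j) u \<and> 0 \<le> z (2 * j + 1) u \<and> z (2 * j) u \<le> z (2 * j + 1) u * exp (\<theta> ^ j * s)"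
          if "u \<in> V" for u using zb Suc that by (auto intro: less_imp_le)
        show "0 \<le> z (2 * j + 2) u \<and> z (2 * j + 2) u \<le> exp 0 * Fmap E D c \<zeta> (z (2 * j + 1)) u \<and>
          exp (- 0) * Fmap E D c \<zeta> (z (2 * j)) u \<le> z (2 * j + 1) u" if "u \<in> V" for u
          using zb zS[of "2*j+1" u] zS[of "2*j" u] F_pos by (auto intro: less_imp_le)
        show "z (2 * j + 2) w \<le> exp 0 * Fmap E D c \<zeta> (z (2 * j + 1)) w" using zS[of "2*j+1" w] by simp
        show "exp (- 0) * Fmap E D c \<zeta> (z (2 * j + 2)) w \<le> z (2 * j + 3) w" using zS'[of "2*j+3" "2*j+2" w] by simp
        show "w \<in> V" by fact
      qed
      also have "\<zeta> * c ^ (k - 1) * (real (k - 1) * (\<theta> ^ j * s) / exp 1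
              + (exp (real (k - 1) * 0) - exp (- (real (k - 1) * 0)))) = \<theta> ^ Suc j * s"
        unfolding \<theta>_def s_def by (simp add: algebra_simps)
      finally show "z (2*Suc j) w \<le> z (2*Suc j+1) w * exp (\<theta> ^ Suc j * s)" by (simp add: eval_nat_numeral)
    qed
  qed
  have dec: "decseq (\<lambda>j. z (2*j) w)" if "w \<in> V" for w
    by (rule decseq_SucI) (use A2 that in \<open>simp add: eval_nat_numeral\<close>)
  have inc: "incseq (\<lambda>j. z (2*j+1) w)" if "w \<in> V" for w
    by (rule incseq_SucI) (use A2 that in \<open>simp add: eval_nat_numeral\<close>)
  define x where "x = (\<lambda>w. if w \<in> V then lim (\<lambda>j. z (2*j) w) else undefined)"
  have xlim: "(\<lambda>j. z (2*j) w) \<longlonglongrightarrow> x w" and xle: "\<forall>j. x w \<le> z (2*j) w" if w: "w \<in> V" for w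
  proof -
    obtain L where L: "(\<lambda>j. z (2*j) w) \<longlonglongrightarrow> L" "\<forall>i. L \<le> z (2*i) w"
    proof (rule decseq_convergent[OF dec[OF w], of 0])
      show "\<forall>i. 0 \<le> z (2 * i) w" using zb by (auto intro: less_imp_le)
    qed
    have "x w = L" using w L(1) unfolding x_def by (simp add: limI)
    thus "(\<lambda>j. z (2*j) w) \<longlonglongrightarrow> x w" "\<forall>j. x w \<le> z (2*j) w" using L by auto
  qed
  have xge: "z (2*j+1) w \<le> x w" if w: "w \<in> V" for w j
  proof (rule LIMSEQ_le_const[OF xlim[OF w]])
    show "\<exists>N. \<forall>n\<ge>N. z (2*j+1) w \<le> z (2*n) w"
    proof (intro exI allI impI)
      fix n assume "j \<le> n"
      hence "z (2*j+1) w \<le> z (2*n+1) w" using inc[OF w] by (simp add: incseq_def)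
      also have "\<dots> \<le> z (2*n) w" using A1 w by auto
      finally show "z (2*j+1) w \<le> z (2*n) w" .
    qed
  qed
  have fix_: "x w = Fmap E D c \<zeta> x w" if w: "w \<in> V" for w
  proof -
    have bnd: "\<bar>Fmap E D c \<zeta> x w - x w\<bar> \<le> c * (exp (\<theta> ^ j * s) - 1)" for j
    proof -
      have lo: "\<And>u. u \<in> V \<Longrightarrow> 0 \<le> z (2*j+1) u \<and> z (2*j+1) u \<le> x u"
        using xge zb by (auto intro: less_imp_le)
      have hi: "\<And>u. u \<in> V \<Longrightarrow> 0 \<le> x u \<and> x u \<le> z (2*j) u"
        using xle xge zb by (meson less_imp_le order_trans)
      have "Fmap E D c \<zeta> x w \<le> Fmap E D c \<zeta> (z (2*j+1)) w" by (rule F_anti[OF z lo])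
      also have "\<dots> = z (2*j+2) w" by (rule zS'[symmetric]) simp
      also have "\<dots> \<le> z (2*j) w" using A2 w by auto
      finally have u1: "Fmap E D c \<zeta> x w \<le> z (2*j) w" .
      have "z (2*j+1) w = Fmap E D c \<zeta> (z (2*j)) w" by (rule zS') simp
      also have "\<dots> \<le> Fmap E D c \<zeta> x w" by (rule F_anti[OF z hi])
      finally have l1: "z (2*j+1) w \<le> Fmap E D c \<zeta> x w" .
      have "\<bar>Fmap E D c \<zeta> x w - x w\<bar> \<le> z (2*j) w - z (2*j+1) w"
        using u1 l1 spec[OF xle[OF w], of j] xge[OF w, of j] by (simp add: abs_le_iff)
      also have "\<dots> \<le> z (2*j+1) w * (exp (\<theta> ^ j * s) - 1)" using gap w by (simp add: algebra_simps)
      also have "\<dots> \<le> c * (exp (\<theta> ^ j * s) - 1)"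
        using zb th0 s0 by (intro mult_right_mono) auto
      finally show ?thesis .
    qed
    have "(\<lambda>j. c * (exp (\<theta> ^ j * s) - 1)) \<longlonglongrightarrow> c * (exp (0 * s) - 1)"
      using th0 th1 by (intro tendsto_intros LIMSEQ_power_zero) auto
    hence "\<bar>Fmap E D c \<zeta> x w - x w\<bar> \<le> 0"
      by (intro LIMSEQ_le_const[of _ _ "\<bar>Fmap E D c \<zeta> x w - x w\<bar>"]) (use bnd in auto)
    thus ?thesis by simp
  qed
  have "x \<in> fixpoints V E c \<zeta>"
    unfolding fixpoints_def
  proof (intro CollectI conjI ballI PiE_I)
    fix w assume w: "w \<in> V"
    have "x w \<le> z (2*0) w" using xle[OF w] by blast
    thus "x w \<in> {0..c}" using xge[OF w, of 0] zb[of 1 w] z0 by auto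
    show "x w = Fmap E D c \<zeta> x w" by (rule fix_[OF w])
  next
    fix w assume "w \<notin> V" thus "x w = undefined" unfolding x_def by simp
  qed
  thus ?thesis by blast
qed

lemma fp_ex1:
  assumes "0 \<le> \<zeta>" "real (k - 1) * \<zeta> * c ^ (k - 1) < exp 1"
  shows "\<exists>!x. x \<in> fixpoints V E c \<zeta>"
  using fp_exists[OF assms] fp_unique[OF assms] by blast

definition X :: "real \<Rightarrow> 'a \<Rightarrow> real" where
  "X \<zeta> = (THE x. x \<in> fixpoints V E c \<zeta>)"

lemma X_fp: assumes "0 \<le> \<zeta>" "real (k - 1) * \<zeta> * c ^ (k - 1) < exp 1"
  shows "X \<zeta> \<in> fixpoints V E c \<zeta>"
  unfolding X_def using fp_ex1[OF assms] by (rule theI')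

lemma X_eq: assumes "0 \<le> \<zeta>" "real (k - 1) * \<zeta> * c ^ (k - 1) < exp 1" "y \<in> fixpoints V E c \<zeta>"
  shows "y = X \<zeta>"
  using fp_unique[OF assms(1,2) assms(3) X_fp[OF assms(1,2)]] .

lemma F_change:
  assumes "0 \<le> \<zeta>" "0 \<le> \<zeta>'" "v \<in> V" "\<And>u. u \<in> V \<Longrightarrow> 0 \<le> y u \<and> y u \<le> c"
  shows "Fmap E D c \<zeta>' y v \<le> exp (\<bar>\<zeta>' - \<zeta>\<bar> * c ^ (k - 1)) * Fmap E D c \<zeta> y v"
    and "exp (- (\<bar>\<zeta>' - \<zeta>\<bar> * c ^ (k - 1))) * Fmap E D c \<zeta> y v \<le> Fmap E D c \<zeta>' y v"
proof -
  define a where "a = A y v / real D"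
  have a0: "0 \<le> a" unfolding a_def using A_nonneg assms(4) by simp
  have "A y v \<le> real D * c ^ (k - 1)" using A_le assms cpos by simp
  hence a1: "a \<le> c ^ (k - 1)" unfolding a_def using Dpos by (simp add: divide_simps mult.commute)
  have F1: "Fmap E D c t y v = c * exp (- (t * a))" for t unfolding F_eq a_def by simp
  have b: "\<bar>(\<zeta>' - \<zeta>) * a\<bar> \<le> \<bar>\<zeta>' - \<zeta>\<bar> * c ^ (k - 1)"
    using a0 a1 by (simp add: abs_mult mult_left_mono)
  have "exp (- (\<zeta>' * a)) = exp (- ((\<zeta>' - \<zeta>) * a)) * exp (- (\<zeta> * a))"
    by (simp add: mult_exp_exp algebra_simps)
  hence eq: "c * exp (- (\<zeta>' * a)) = exp (- ((\<zeta>' - \<zeta>) * a)) * (c * exp (- (\<zeta> * a)))"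
    by simp
  show "Fmap E D c \<zeta>' y v \<le> exp (\<bar>\<zeta>' - \<zeta>\<bar> * c ^ (k - 1)) * Fmap E D c \<zeta> y v"
    unfolding F1 eq using b cpos by (intro mult_right_mono) auto
  show "exp (- (\<bar>\<zeta>' - \<zeta>\<bar> * c ^ (k - 1))) * Fmap E D c \<zeta> y v \<le> Fmap E D c \<zeta>' y v"
    unfolding F1 eq using b cpos by (intro mult_right_mono) auto
qed

lemma X_close:
  assumes z: "0 \<le> \<zeta>" "0 \<le> \<zeta>'" and th: "real (k - 1) * \<zeta> * c ^ (k - 1) < exp 1"
    "real (k - 1) * \<zeta>' * c ^ (k - 1) < exp 1" and v: "v \<in> V"
  shows "\<bar>X \<zeta>' v - X \<zeta> v\<bar> \<le> c * (exp (Bd \<zeta> (\<bar>\<zeta>' - \<zeta>\<bar> * c ^ (k - 1))) - 1)"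
proof -
  define \<delta> where "\<delta> = \<bar>\<zeta>' - \<zeta>\<bar> * c ^ (k - 1)"
  have d0: "0 \<le> \<delta>" unfolding \<delta>_def using cpos by simp
  have x: "X \<zeta> \<in> fixpoints V E c \<zeta>" by (rule X_fp[OF z(1) th(1)])
  have x': "X \<zeta>' \<in> fixpoints V E c \<zeta>'" by (rule X_fp[OF z(2) th(2)])
  define p where "p = (\<lambda>w. max (X \<zeta> w) (X \<zeta>' w))"
  define q where "q = (\<lambda>w. min (X \<zeta> w) (X \<zeta>' w))"
  have qx: "\<And>u. u \<in> V \<Longrightarrow> 0 \<le> q u \<and> q u \<le> X \<zeta> u" and qy: "\<And>u. u \<in> V \<Longrightarrow> 0 \<le> q u \<and> q u \<le> X \<zeta>' u"
    unfolding q_def using fp_props[OF x] fp_props[OF x'] by (auto intro: less_imp_le)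
  have xp: "\<And>u. u \<in> V \<Longrightarrow> 0 \<le> X \<zeta> u \<and> X \<zeta> u \<le> p u" and yp: "\<And>u. u \<in> V \<Longrightarrow> 0 \<le> X \<zeta>' u \<and> X \<zeta>' u \<le> p u"
    unfolding p_def using fp_props[OF x] fp_props[OF x'] by (auto intro: less_imp_le)
  have xc: "\<And>u. u \<in> V \<Longrightarrow> 0 \<le> X \<zeta>' u \<and> X \<zeta>' u \<le> c"
    using fp_props[OF x'] by (auto intro: less_imp_le)
  have "p v \<le> q v * exp (Bd \<zeta> \<delta>)"
  proof (rule perturb[OF z(1) d0 th(1) _ _ v])
    fix w assume w: "w \<in> V"
    show "0 < p w \<and> 0 < q w" unfolding p_def q_def using fp_props[OF x w] fp_props[OF x' w] by auto
    have e1: "1 \<le> exp \<delta>" "exp (- \<delta>) \<le> 1" using d0 by auto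
    have Fq: "0 \<le> Fmap E D c \<zeta> q w" "0 \<le> Fmap E D c \<zeta> p w" by (simp_all add: less_imp_le[OF F_pos])
    have "X \<zeta> w \<le> Fmap E D c \<zeta> q w" using fp_props(3)[OF x w] F_anti[OF z(1) qx] by simp
    also have "\<dots> \<le> exp \<delta> * Fmap E D c \<zeta> q w" using e1 Fq by (simp add: mult_le_cancel_right1)
    finally have 1: "X \<zeta> w \<le> exp \<delta> * Fmap E D c \<zeta> q w" .
    have "X \<zeta>' w \<le> exp \<delta> * Fmap E D c \<zeta> (X \<zeta>') w"
      using fp_props(3)[OF x' w] F_change(1)[OF z(1) z(2) w xc] unfolding \<delta>_def by simp
    also have "\<dots> \<le> exp \<delta> * Fmap E D c \<zeta> q w" using F_anti[OF z(1) qy] by simp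
    finally have 2: "X \<zeta>' w \<le> exp \<delta> * Fmap E D c \<zeta> q w" .
    have "exp (- \<delta>) * Fmap E D c \<zeta> p w \<le> Fmap E D c \<zeta> p w" using e1 Fq by (intro mult_left_le_one_le) auto
    also have "\<dots> \<le> X \<zeta> w" using fp_props(3)[OF x w] F_anti[OF z(1) xp] by simp
    finally have 3: "exp (- \<delta>) * Fmap E D c \<zeta> p w \<le> X \<zeta> w" .
    have "exp (- \<delta>) * Fmap E D c \<zeta> p w \<le> exp (- \<delta>) * Fmap E D c \<zeta> (X \<zeta>') w"
      using F_anti[OF z(1) yp] by simp
    also have "\<dots> \<le> X \<zeta>' w"
      using fp_props(3)[OF x' w] F_change(2)[OF z(1) z(2) w xc] unfolding \<delta>_def by simp
    finally have 4: "exp (- \<delta>) * Fmap E D c \<zeta> p w \<le> X \<zeta>' w" .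
    show "p w \<le> exp \<delta> * Fmap E D c \<zeta> q w \<and> exp (- \<delta>) * Fmap E D c \<zeta> p w \<le> q w"
      using 1 2 3 4 unfolding p_def q_def by simp
  qed
  hence "p v - q v \<le> q v * (exp (Bd \<zeta> \<delta>) - 1)" by (simp add: algebra_simps)
  moreover have "0 \<le> p v - q v" unfolding p_def q_def by simp
  moreover have "0 < q v" "q v \<le> c" unfolding q_def using fp_props[OF x v] fp_props[OF x' v] by auto
  ultimately have "p v - q v \<le> c * (exp (Bd \<zeta> \<delta>) - 1)"
    by (smt (verit, best) mult_right_mono zero_le_mult_iff)
  moreover have "\<bar>X \<zeta>' v - X \<zeta> v\<bar> = p v - q v" unfolding p_def q_def by auto
  ultimately show ?thesis unfolding \<delta>_def by simp
qed

lemma X_cont: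
  assumes z0: "0 \<le> \<zeta>0" and th0: "real (k - 1) * \<zeta>0 * c ^ (k - 1) < exp 1" and v: "v \<in> V"
  shows "continuous_on {0..\<zeta>0} (\<lambda>\<zeta>. X \<zeta> v)"
  unfolding continuous_on_def
proof
  fix \<zeta> assume "\<zeta> \<in> {0..\<zeta>0}"
  hence z: "0 \<le> \<zeta>" "\<zeta> \<le> \<zeta>0" by auto
  have thmo: "real (k - 1) * t * c ^ (k - 1) < exp 1" if "0 \<le> t" "t \<le> \<zeta>0" for t
  proof -
    have "real (k - 1) * t * c ^ (k - 1) \<le> real (k - 1) * \<zeta>0 * c ^ (k - 1)"
      using that cpos by (intro mult_right_mono mult_left_mono) auto
    thus ?thesis using th0 by linarith
  qed
  define g where "g = (\<lambda>t. c * (exp (Bd \<zeta> (\<bar>t - \<zeta>\<bar> * c ^ (k - 1))) - 1))"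
  have "(g \<longlongrightarrow> g \<zeta>) (at \<zeta> within {0..\<zeta>0})"
  proof -
    have ne: "1 - real (k - 1) * \<zeta> * c ^ (k - 1) / exp 1 \<noteq> 0"
      using thmo[OF z] by (simp add: divide_simps)
    show ?thesis unfolding g_def Bd_def
      by (intro tendsto_intros ne)
  qed
  moreover have "g \<zeta> = 0" unfolding g_def by (simp add: Bd0)
  ultimately have g0: "(g \<longlongrightarrow> 0) (at \<zeta> within {0..\<zeta>0})" by simp
  have "((\<lambda>t. X t v - X \<zeta> v) \<longlongrightarrow> 0) (at \<zeta> within {0..\<zeta>0})"
  proof (rule Lim_null_comparison[OF _ g0])
    show "\<forall>\<^sub>F t in at \<zeta> within {0..\<zeta>0}. norm (X t v - X \<zeta> v) \<le> g t"
      unfolding eventually_at_filter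
      by (rule always_eventually) (use X_close[OF z(1) _ thmo[OF z] thmo v] in \<open>auto simp: g_def\<close>)
  qed
  thus "((\<lambda>t. X t v) \<longlongrightarrow> X \<zeta> v) (at \<zeta> within {0..\<zeta>0})" by (rule LIM_zero_cancel)
qed

lemma E_ne: "E \<noteq> {}"
proof
  assume "E = {}"
  hence "hdeg E S = 0" for S unfolding hdeg_def by simp
  hence eq: "{hdeg E S |S. S \<subseteq> V \<and> card S = 1} \<union> {0} = {0}" by auto
  have "maxdeg V E = 0" unfolding maxdeg_def maxcodeg_def by (simp only: eq Max_singleton)
  thus False using Dpos by simp
qed

lemma exists_zeta:
  assumes z0: "0 < \<zeta>0" and th0: "real (k - 1) * \<zeta>0 * c ^ (k - 1) < exp 1"
    and eta: "0 \<le> \<eta>" "\<eta> < 1"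
    and le: "(1 - \<zeta>0) * (\<Sum>e\<in>E. \<Prod>u\<in>e. X \<zeta>0 u) \<le> \<eta> * c ^ k * real (card E)"
  shows "\<exists>\<zeta>. 0 < \<zeta> \<and> \<zeta> \<le> \<zeta>0 \<and> (\<exists>!x. x \<in> fixpoints V E c \<zeta>) \<and>
           (\<forall>x \<in> fixpoints V E c \<zeta>. (1 - \<zeta>) * (\<Sum>e\<in>E. \<Prod>u\<in>e. x u) = \<eta> * c ^ k * real (card E))"
proof -
  have thmo: "real (k - 1) * t * c ^ (k - 1) < exp 1" if "0 \<le> t" "t \<le> \<zeta>0" for t
  proof -
    have "real (k - 1) * t * c ^ (k - 1) \<le> real (k - 1) * \<zeta>0 * c ^ (k - 1)"
      using that cpos by (intro mult_right_mono mult_left_mono) auto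
    thus ?thesis using th0 by linarith
  qed
  define g where "g = (\<lambda>t. (1 - t) * (\<Sum>e\<in>E. \<Prod>u\<in>e. X t u))"
  have cont: "continuous_on {0..\<zeta>0} g" unfolding g_def
  proof (intro continuous_on_mult continuous_on_diff continuous_on_const continuous_on_id continuous_on_sum continuous_on_prod)
    fix e u assume "e \<in> E" "u \<in> e"
    hence "u \<in> V" using edges by blast
    thus "continuous_on {0..\<zeta>0} (\<lambda>t. X t u)" using X_cont z0 th0 by simp
  qed
  have X0: "X 0 = (\<lambda>v\<in>V. c)"
  proof -
    have "(\<lambda>v\<in>V. c) \<in> fixpoints V E c 0" unfolding fixpoints_def Fmap_def using cpos by auto
    thus ?thesis using X_eq[of 0] cpos by simp
  qed
  have g0: "g 0 = c ^ k * real (card E)"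
  proof -
    have "(\<Prod>u\<in>e. X 0 u) = c ^ k" if "e \<in> E" for e
    proof -
      have "(\<Prod>u\<in>e. X 0 u) = (\<Prod>u\<in>e. c)" using that edges unfolding X0 by (intro prod.cong) auto
      thus ?thesis using that by simp
    qed
    thus ?thesis unfolding g_def by simp
  qed
  have T: "\<eta> * c ^ k * real (card E) \<le> g 0"
  proof -
    have "\<eta> * (c ^ k * real (card E)) \<le> 1 * (c ^ k * real (card E))"
      using eta cpos by (intro mult_right_mono) auto
    thus ?thesis unfolding g0 by (simp add: mult.assoc)
  qed
  obtain \<zeta> where zz: "0 \<le> \<zeta>" "\<zeta> \<le> \<zeta>0" "g \<zeta> = \<eta> * c ^ k * real (card E)"
    using IVT2'[of g \<zeta>0 "\<eta> * c ^ k * real (card E)" 0, OF _ T _ cont] le z0 unfolding g_def by auto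
  have "\<zeta> \<noteq> 0"
  proof
    assume "\<zeta> = 0"
    hence "c ^ k * real (card E) = \<eta> * c ^ k * real (card E)" using zz g0 by simp
    moreover have "card E > 0" using E_ne finE by (simp add: card_gt_0_iff)
    ultimately show False using eta cpos by simp
  qed
  hence "0 < \<zeta>" using zz by simp
  moreover have "\<forall>x \<in> fixpoints V E c \<zeta>. (1 - \<zeta>) * (\<Sum>e\<in>E. \<Prod>u\<in>e. x u) = \<eta> * c ^ k * real (card E)"
    using X_eq[OF zz(1) thmo[OF zz(1,2)]] zz(3) unfolding g_def by auto
  ultimately show ?thesis using zz fp_ex1[OF zz(1) thmo[OF zz(1,2)]] by blast
qed

lemma reg_bound:
  assumes z: "0 \<le> \<zeta>0" and th: "real (k - 1) * \<zeta>0 * c ^ (k - 1) < exp 1"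
    and y: "0 < y" "y = c * exp (- (\<zeta>0 * y ^ (k - 1)))"
    and r: "0 \<le> r" "r \<le> 1" "\<And>w. w \<in> V \<Longrightarrow> r * real D \<le> real (card {e\<in>E. w \<in> e})"
    and v: "v \<in> V"
  shows "X \<zeta>0 v \<le> y * exp (Bd \<zeta>0 (\<zeta>0 * (1 - r) * c ^ (k - 1)))"
proof -
  define \<delta> where "\<delta> = \<zeta>0 * (1 - r) * c ^ (k - 1)"
  have d0: "0 \<le> \<delta>" unfolding \<delta>_def using z r cpos by simp
  have yc: "y \<le> c"
  proof -
    have "exp (- (\<zeta>0 * y ^ (k - 1))) \<le> 1" using z y(1) by simp
    hence "c * exp (- (\<zeta>0 * y ^ (k - 1))) \<le> c * 1" using cpos by (intro mult_left_mono) auto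
    thus ?thesis using y(2) by simp
  qed
  have x: "X \<zeta>0 \<in> fixpoints V E c \<zeta>0" by (rule X_fp[OF z th])
  define Y where "Y = (\<lambda>w::'a. y)"
  have FY: "Fmap E D c \<zeta>0 Y w = c * exp (- (\<zeta>0 / real D * real (card {e\<in>E. w \<in> e}) * y ^ (k - 1)))" for w
    unfolding F_eq Y_def A_const by (simp add: algebra_simps)
  have FY1: "y \<le> Fmap E D c \<zeta>0 Y w" if w: "w \<in> V" for w
  proof -
    have "\<zeta>0 / real D * real (card {e\<in>E. w \<in> e}) \<le> \<zeta>0 / real D * real D"
      using deg_le[OF w] z by (intro mult_left_mono) auto
    hence "\<zeta>0 / real D * real (card {e\<in>E. w \<in> e}) * y ^ (k - 1) \<le> \<zeta>0 * y ^ (k - 1)"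
      using Dpos y by (intro mult_right_mono) auto
    thus ?thesis unfolding FY using cpos by (subst y(2)) simp
  qed
  have FY2: "Fmap E D c \<zeta>0 Y w \<le> exp \<delta> * y" if w: "w \<in> V" for w
  proof -
    have "\<zeta>0 * r \<le> \<zeta>0 / real D * real (card {e\<in>E. w \<in> e})"
    proof -
      have h: "\<zeta>0 * (r * real D) \<le> \<zeta>0 * real (card {e\<in>E. w \<in> e})" by (rule mult_left_mono[OF r(3)[OF w] z])
      have Dp: "0 < real D" using Dpos by simp
      show ?thesis using h Dp by (simp add: field_simps)
    qed
    hence "\<zeta>0 * r * y ^ (k - 1) \<le> \<zeta>0 / real D * real (card {e\<in>E. w \<in> e}) * y ^ (k - 1)"
      using y by (intro mult_right_mono) auto
    hence "Fmap E D c \<zeta>0 Y w \<le> c * exp (- (\<zeta>0 * r * y ^ (k - 1)))" unfolding FY using cpos by simp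
    also have "\<dots> = exp (\<zeta>0 * (1 - r) * y ^ (k - 1)) * (c * exp (- (\<zeta>0 * y ^ (k - 1))))"
    proof -
      have "exp (- (\<zeta>0 * r * y ^ (k - 1))) = exp (\<zeta>0 * (1 - r) * y ^ (k - 1)) * exp (- (\<zeta>0 * y ^ (k - 1)))"
        by (simp add: mult_exp_exp algebra_simps)
      thus ?thesis by simp
    qed
    also have "\<dots> \<le> exp \<delta> * y"
    proof -
      have "y ^ (k - 1) \<le> c ^ (k - 1)" using y yc by (intro power_mono) auto
      hence "\<zeta>0 * (1 - r) * y ^ (k - 1) \<le> \<delta>" unfolding \<delta>_def using z r by (intro mult_left_mono) auto
      thus ?thesis using y by (subst (2) y(2)) (auto intro: mult_right_mono)
    qed
    finally show ?thesis .
  qed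
  define p where "p = (\<lambda>w. max (X \<zeta>0 w) y)"
  define q where "q = (\<lambda>w. min (X \<zeta>0 w) y)"
  have qx: "\<And>u. u \<in> V \<Longrightarrow> 0 \<le> q u \<and> q u \<le> X \<zeta>0 u" and qy: "\<And>u. u \<in> V \<Longrightarrow> 0 \<le> q u \<and> q u \<le> Y u"
    unfolding q_def Y_def using fp_props[OF x] y by (auto intro: less_imp_le)
  have xp: "\<And>u. u \<in> V \<Longrightarrow> 0 \<le> X \<zeta>0 u \<and> X \<zeta>0 u \<le> p u" and yp: "\<And>u. u \<in> V \<Longrightarrow> 0 \<le> Y u \<and> Y u \<le> p u"
    unfolding p_def Y_def using fp_props[OF x] y by (auto intro: less_imp_le)
  have "p v \<le> q v * exp (Bd \<zeta>0 \<delta>)"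
  proof (rule perturb[OF z d0 th _ _ v])
    fix w assume w: "w \<in> V"
    show "0 < p w \<and> 0 < q w" unfolding p_def q_def using fp_props[OF x w] y by auto
    have e1: "1 \<le> exp \<delta>" "exp (- \<delta>) \<le> 1" using d0 by auto
    have Fq: "0 \<le> Fmap E D c \<zeta>0 q w" "0 \<le> Fmap E D c \<zeta>0 p w" by (simp_all add: less_imp_le[OF F_pos])
    have "X \<zeta>0 w \<le> Fmap E D c \<zeta>0 q w" using fp_props(3)[OF x w] F_anti[OF z qx] by simp
    also have "\<dots> \<le> exp \<delta> * Fmap E D c \<zeta>0 q w" using e1 Fq by (simp add: mult_le_cancel_right1)
    finally have 1: "X \<zeta>0 w \<le> exp \<delta> * Fmap E D c \<zeta>0 q w" .
    have "y \<le> Fmap E D c \<zeta>0 Y w" by (rule FY1[OF w])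
    also have "\<dots> \<le> Fmap E D c \<zeta>0 q w" using F_anti[OF z qy] by simp
    also have "\<dots> \<le> exp \<delta> * Fmap E D c \<zeta>0 q w" using e1 Fq by (simp add: mult_le_cancel_right1)
    finally have 2: "y \<le> exp \<delta> * Fmap E D c \<zeta>0 q w" .
    have "exp (- \<delta>) * Fmap E D c \<zeta>0 p w \<le> Fmap E D c \<zeta>0 p w" using e1 Fq by (intro mult_left_le_one_le) auto
    also have "\<dots> \<le> X \<zeta>0 w" using fp_props(3)[OF x w] F_anti[OF z xp] by simp
    finally have 3: "exp (- \<delta>) * Fmap E D c \<zeta>0 p w \<le> X \<zeta>0 w" .
    have "exp (- \<delta>) * Fmap E D c \<zeta>0 p w \<le> exp (- \<delta>) * Fmap E D c \<zeta>0 Y w"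
      using F_anti[OF z yp] by simp
    also have "\<dots> \<le> exp (- \<delta>) * (exp \<delta> * y)" using FY2[OF w] by simp
    also have "\<dots> = y" by (simp add: mult.assoc[symmetric] mult_exp_exp)
    finally have 4: "exp (- \<delta>) * Fmap E D c \<zeta>0 p w \<le> y" .
    show "p w \<le> exp \<delta> * Fmap E D c \<zeta>0 q w \<and> exp (- \<delta>) * Fmap E D c \<zeta>0 p w \<le> q w"
      using 1 2 3 4 unfolding p_def q_def by simp
  qed
  moreover have "X \<zeta>0 v \<le> p v" "q v \<le> y" unfolding p_def q_def by auto
  ultimately show ?thesis unfolding \<delta>_def
    by (meson exp_gt_zero less_imp_le mult_right_mono order_trans)
qed

end



lemma hg_intro:
  assumes "uniform_hypergraph k V E" "k \<ge> 2" "c > 0" "maxdeg V E > 0"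
  shows "hg V E k c"
  using assms unfolding uniform_hypergraph_def hg_def by auto

lemma final:
  fixes V :: "nat \<Rightarrow> 'a set" and E :: "nat \<Rightarrow> 'a set set"
  assumes k2: "k \<ge> 2" and cpos: "0 < c" and eta: "0 \<le> \<eta>" "\<eta> < 1"
    and unif: "\<And>n. uniform_hypergraph k (V n) (E n)"
    and z0: "0 < \<zeta>0" "\<zeta>0 \<le> 1" and th0: "real (k - 1) * \<zeta>0 * c ^ (k - 1) < exp 1"
    and ev: "\<forall>\<^sub>F n in sequentially. 0 < maxdeg (V n) (E n) \<and>
        (\<forall>x\<in>fixpoints (V n) (E n) c \<zeta>0. (1 - \<zeta>0) * (\<Sum>e\<in>E n. \<Prod>u\<in>e. x u) \<le> \<eta> * c ^ k * real (card (E n)))"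
  shows "\<exists>\<zeta> :: nat \<Rightarrow> real.
           (\<forall>\<^sub>F n in sequentially. 0 < \<zeta> n \<and> \<zeta> n \<le> 1) \<and>
           limsup (\<lambda>n. ereal (\<zeta> n * (real k - 1) * c ^ (k - 1))) < ereal (exp 1) \<and>
           (\<forall>\<^sub>F n in sequentially. \<exists>!x. x \<in> fixpoints (V n) (E n) c (\<zeta> n)) \<and>
           (\<exists>\<epsilon> :: nat \<Rightarrow> real. \<epsilon> \<longlonglongrightarrow> 0 \<and>
              (\<forall>\<^sub>F n in sequentially. \<forall>x \<in> fixpoints (V n) (E n) c (\<zeta> n).
                 (1 - \<zeta> n) * (\<Sum>e\<in>E n. \<Prod>u\<in>e. x u)
                   = (1 + \<epsilon> n) * (\<eta> * c ^ k * real (card (E n)))))"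
proof -
  define P where "P = (\<lambda>n \<zeta>. 0 < \<zeta> \<and> \<zeta> \<le> \<zeta>0 \<and> (\<exists>!x. x \<in> fixpoints (V n) (E n) c \<zeta>) \<and>
           (\<forall>x \<in> fixpoints (V n) (E n) c \<zeta>. (1 - \<zeta>) * (\<Sum>e\<in>E n. \<Prod>u\<in>e. x u) = \<eta> * c ^ k * real (card (E n))))"
  have exP: "\<forall>\<^sub>F n in sequentially. \<exists>\<zeta>. P n \<zeta>"
    using ev
  proof eventually_elim
    case (elim n)
    then interpret hg "V n" "E n" k c using hg_intro[OF unif k2 cpos] by blast
    have "X \<zeta>0 \<in> fixpoints (V n) (E n) c \<zeta>0" using X_fp z0 th0 by simp
    hence le: "(1 - \<zeta>0) * (\<Sum>e\<in>E n. \<Prod>u\<in>e. X \<zeta>0 u) \<le> \<eta> * c ^ k * real (card (E n))" using elim by blast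
    show ?case using exists_zeta[OF z0(1) th0 eta le] unfolding P_def .
  qed
  define \<zeta> where "\<zeta> = (\<lambda>n. SOME z. P n z)"
  have evP: "\<forall>\<^sub>F n in sequentially. P n (\<zeta> n)"
    using exP by eventually_elim (unfold \<zeta>_def, rule someI_ex)
  have G1: "\<forall>\<^sub>F n in sequentially. 0 < \<zeta> n \<and> \<zeta> n \<le> 1"
    using evP by eventually_elim (use z0 in \<open>auto simp: P_def\<close>)
  have G3: "\<forall>\<^sub>F n in sequentially. \<exists>!x. x \<in> fixpoints (V n) (E n) c (\<zeta> n)"
    using evP by eventually_elim (auto simp: P_def)
  have "limsup (\<lambda>n. ereal (\<zeta> n * (real k - 1) * c ^ (k - 1))) \<le> ereal (\<zeta>0 * (real k - 1) * c ^ (k - 1))"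
  proof (rule Limsup_bounded)
    show "\<forall>\<^sub>F n in sequentially. ereal (\<zeta> n * (real k - 1) * c ^ (k - 1)) \<le> ereal (\<zeta>0 * (real k - 1) * c ^ (k - 1))"
      using evP
    proof eventually_elim
      case (elim n)
      hence "\<zeta> n \<le> \<zeta>0" unfolding P_def by blast
      moreover have "0 \<le> (real k - 1) * c ^ (k - 1)" using k2 cpos by simp
      ultimately show ?case by (simp add: mult_right_mono mult.assoc)
    qed
  qed
  also have "\<dots> < ereal (exp 1)" using th0 k2 by (simp add: of_nat_diff mult.commute mult.left_commute)
  finally have G2: "limsup (\<lambda>n. ereal (\<zeta> n * (real k - 1) * c ^ (k - 1))) < ereal (exp 1)" .
  have H: "\<forall>\<^sub>F n in sequentially. \<forall>x \<in> fixpoints (V n) (E n) c (\<zeta> n).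
             (1 - \<zeta> n) * (\<Sum>e\<in>E n. \<Prod>u\<in>e. x u) = (1 + 0) * (\<eta> * c ^ k * real (card (E n)))"
    using evP by eventually_elim (auto simp: P_def)
  have G4: "\<exists>\<epsilon> :: nat \<Rightarrow> real. \<epsilon> \<longlonglongrightarrow> 0 \<and>
              (\<forall>\<^sub>F n in sequentially. \<forall>x \<in> fixpoints (V n) (E n) c (\<zeta> n).
                 (1 - \<zeta> n) * (\<Sum>e\<in>E n. \<Prod>u\<in>e. x u)
                   = (1 + \<epsilon> n) * (\<eta> * c ^ k * real (card (E n))))"
    using H by (intro exI[of _ "\<lambda>_. 0"] conjI tendsto_const)
  show ?thesis using G1 G2 G3 G4 by blast
qed


context hg begin

lemma V_ne: "V \<noteq> {}"
proof -
  obtain e where e: "e \<in> E" using E_ne by blast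
  have "card e = k" using e by simp
  hence "e \<noteq> {}" using k2 by auto
  thus ?thesis using edges[OF e] by blast
qed

lemma mindeg_le: assumes "w \<in> V" shows "mindeg V E \<le> card {e\<in>E. w \<in> e}"
proof -
  have eq: "{hdeg E {v} |v. v \<in> V} \<union> (if V = {} then {0} else {}) = (\<lambda>v. hdeg E {v}) ` V"
    using V_ne by auto
  have "Min ((\<lambda>v. hdeg E {v}) ` V) \<le> hdeg E {w}" using finV assms by (intro Min_le) auto
  moreover have "mindeg V E = Min ((\<lambda>v. hdeg E {v}) ` V)" unfolding mindeg_def eq ..
  ultimately show ?thesis by (simp add: hdeg_single)
qed

lemma mindeg_le_D: "mindeg V E \<le> D"
proof -
  obtain w where "w \<in> V" using V_ne by blast
  thus ?thesis using mindeg_le deg_le le_trans by blast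
qed

lemma sum_prod_le:
  assumes "\<And>u. u \<in> V \<Longrightarrow> 0 \<le> x u \<and> x u \<le> b"
  shows "(\<Sum>e\<in>E. \<Prod>u\<in>e. x u) \<le> real (card E) * b ^ k"
proof -
  have "(\<Sum>e\<in>E. \<Prod>u\<in>e. x u) \<le> (\<Sum>e\<in>E. b ^ k)"
  proof (rule sum_mono)
    fix e assume e: "e \<in> E"
    hence "e \<subseteq> V" using edges by blast
    hence "(\<Prod>u\<in>e. x u) \<le> (\<Prod>u\<in>e. b)" using assms by (intro prod_mono) auto
    thus "(\<Prod>u\<in>e. x u) \<le> b ^ k" using e by simp
  qed
  thus ?thesis by simp
qed

lemma fp_bounds: "x \<in> fixpoints V E c \<zeta> \<Longrightarrow> u \<in> V \<Longrightarrow> 0 \<le> x u \<and> x u \<le> c"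
  using fp_props by (auto intro: less_imp_le)

end

lemma powr_less_pow:
  fixes b c :: real and m :: nat
  assumes "0 < c" "0 < b" "m \<ge> 1" "c < b powr (1 / real m)"
  shows "c ^ m < b"
proof -
  have "c powr real m < (b powr (1 / real m)) powr real m"
    using assms by (intro powr_less_mono2) auto
  also have "\<dots> = b" using assms by (simp add: powr_powr)
  finally show ?thesis using assms by (simp add: powr_realpow)
qed

lemma powr_ge_pow:
  fixes b c :: real and m :: nat
  assumes "0 < c" "0 < b" "m \<ge> 1" "b powr (1 / real m) \<le> c"
  shows "b \<le> c ^ m"
proof -
  have "b = (b powr (1 / real m)) powr real m" using assms by (simp add: powr_powr)
  also have "\<dots> \<le> c powr real m" using assms by (intro powr_mono2) auto
  finally show ?thesis using assms by (simp add: powr_realpow)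
qed

lemma ev_pos:
  assumes "filterlim (\<lambda>n. real (maxdeg (V n) (E n))) at_top sequentially"
  shows "\<forall>\<^sub>F n in sequentially. 0 < maxdeg (V n) (E n)"
proof -
  have "\<forall>\<^sub>F n in sequentially. 1 \<le> real (maxdeg (V n) (E n))"
    using assms unfolding filterlim_at_top by blast
  thus ?thesis by eventually_elim simp
qed


lemma caseA:
  fixes V :: "nat \<Rightarrow> 'a set" and E :: "nat \<Rightarrow> 'a set set"
  assumes k2: "k \<ge> 2" and cpos: "0 < c" and eta: "0 \<le> \<eta>" "\<eta> < 1"
    and unif: "\<And>n. uniform_hypergraph k (V n) (E n)"
    and lim: "filterlim (\<lambda>n. real (maxdeg (V n) (E n))) at_top sequentially"
    and cc: "c < c_k k \<eta>"
  shows "\<exists>\<zeta> :: nat \<Rightarrow> real.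
           (\<forall>\<^sub>F n in sequentially. 0 < \<zeta> n \<and> \<zeta> n \<le> 1) \<and>
           limsup (\<lambda>n. ereal (\<zeta> n * (real k - 1) * c ^ (k - 1))) < ereal (exp 1) \<and>
           (\<forall>\<^sub>F n in sequentially. \<exists>!x. x \<in> fixpoints (V n) (E n) c (\<zeta> n)) \<and>
           (\<exists>\<epsilon> :: nat \<Rightarrow> real. \<epsilon> \<longlonglongrightarrow> 0 \<and>
              (\<forall>\<^sub>F n in sequentially. \<forall>x \<in> fixpoints (V n) (E n) c (\<zeta> n).
                 (1 - \<zeta> n) * (\<Sum>e\<in>E n. \<Prod>u\<in>e. x u)
                   = (1 + \<epsilon> n) * (\<eta> * c ^ k * real (card (E n)))))"
proof -
  have rk: "real k - 1 = real (k - 1)" using k2 by (simp add: of_nat_diff)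
  define b where "b = exp 1 / ((1 - \<eta>) * real (k - 1))"
  have bpos: "0 < b" unfolding b_def using eta k2 by simp
  have "c ^ (k - 1) < b"
    using powr_less_pow[OF cpos bpos _ cc[unfolded c_k_def rk, folded b_def]] k2 by simp
  hence "(1 - \<eta>) * real (k - 1) * c ^ (k - 1) < (1 - \<eta>) * real (k - 1) * b"
    using eta k2 by (intro mult_strict_left_mono) auto
  also have "\<dots> = exp 1" unfolding b_def using eta k2 by simp
  finally have th0: "real (k - 1) * (1 - \<eta>) * c ^ (k - 1) < exp 1" by (simp add: mult.commute mult.left_commute)
  show ?thesis
  proof (rule final[OF k2 cpos eta unif _ _ th0])
    show "0 < 1 - \<eta>" "1 - \<eta> \<le> 1" using eta by auto
    show "\<forall>\<^sub>F n in sequentially. 0 < maxdeg (V n) (E n) \<and>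
        (\<forall>x\<in>fixpoints (V n) (E n) c (1 - \<eta>). (1 - (1 - \<eta>)) * (\<Sum>e\<in>E n. \<Prod>u\<in>e. x u) \<le> \<eta> * c ^ k * real (card (E n)))"
      using ev_pos[OF lim]
    proof eventually_elim
      case (elim n)
      then interpret hg "V n" "E n" k c using hg_intro[OF unif k2 cpos] by blast
      show ?case
      proof (intro conjI ballI)
        fix x assume x: "x \<in> fixpoints (V n) (E n) c (1 - \<eta>)"
        have "(\<Sum>e\<in>E n. \<Prod>u\<in>e. x u) \<le> real (card (E n)) * c ^ k"
          using fp_bounds[OF x] by (intro sum_prod_le) auto
        hence "\<eta> * (\<Sum>e\<in>E n. \<Prod>u\<in>e. x u) \<le> \<eta> * (real (card (E n)) * c ^ k)"
          using eta by (intro mult_left_mono) auto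
        thus "(1 - (1 - \<eta>)) * (\<Sum>e\<in>E n. \<Prod>u\<in>e. x u) \<le> \<eta> * c ^ k * real (card (E n))"
          by (simp add: mult.commute mult.left_commute)
      qed (use elim in auto)
    qed
  qed
qed


lemma caseB:
  fixes V :: "nat \<Rightarrow> 'a set" and E :: "nat \<Rightarrow> 'a set set"
  assumes k2: "k \<ge> 2" and cpos: "0 < c" and eta: "0 \<le> \<eta>" "\<eta> < 1"
    and unif: "\<And>n. uniform_hypergraph k (V n) (E n)"
    and lim: "filterlim (\<lambda>n. real (maxdeg (V n) (E n))) at_top sequentially"
    and reg: "(\<lambda>n. real (mindeg (V n) (E n)) / real (maxdeg (V n) (E n))) \<longlonglongrightarrow> 1"
    and cc: "\<not> c < c_k k \<eta>" and cb: "ereal c < cbar_k k \<eta>"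
  shows "\<exists>\<zeta> :: nat \<Rightarrow> real.
           (\<forall>\<^sub>F n in sequentially. 0 < \<zeta> n \<and> \<zeta> n \<le> 1) \<and>
           limsup (\<lambda>n. ereal (\<zeta> n * (real k - 1) * c ^ (k - 1))) < ereal (exp 1) \<and>
           (\<forall>\<^sub>F n in sequentially. \<exists>!x. x \<in> fixpoints (V n) (E n) c (\<zeta> n)) \<and>
           (\<exists>\<epsilon> :: nat \<Rightarrow> real. \<epsilon> \<longlonglongrightarrow> 0 \<and>
              (\<forall>\<^sub>F n in sequentially. \<forall>x \<in> fixpoints (V n) (E n) c (\<zeta> n).
                 (1 - \<zeta> n) * (\<Sum>e\<in>E n. \<Prod>u\<in>e. x u)
                   = (1 + \<epsilon> n) * (\<eta> * c ^ k * real (card (E n)))))"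
proof -
  have rk: "real k - 1 = real (k - 1)" using k2 by (simp add: of_nat_diff)
  define m where "m = k - 1"
  have m1: "m \<ge> 1" unfolding m_def using k2 by simp
  have rm: "real m > 0" using m1 by simp
  have cm: "0 < c ^ m" using cpos by simp
  define \<zeta>m where "\<zeta>m = exp 1 / (real m * c ^ m)"
  have zmpos: "0 < \<zeta>m" unfolding \<zeta>m_def using rm cm by simp
  define b where "b = exp 1 / ((1 - \<eta>) * real m)"
  have bpos: "0 < b" unfolding b_def using eta rm by simp
  have "b \<le> c ^ m"
    using powr_ge_pow[OF cpos bpos m1] cc unfolding c_k_def rk m_def[symmetric] b_def by simp
  hence "(1 - \<eta>) * real m * b \<le> (1 - \<eta>) * real m * c ^ m" using eta rm by (intro mult_left_mono) auto
  hence "exp 1 \<le> (1 - \<eta>) * (real m * c ^ m)" unfolding b_def using eta rm by (simp add: mult.assoc)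
  hence zm1: "\<zeta>m \<le> 1 - \<eta>" unfolding \<zeta>m_def using rm cm by (simp add: divide_simps)
  define \<eta>s where "\<eta>s = eta_star k"
  have es_pos: "0 < \<eta>s" unfolding \<eta>s_def eta_star_def by simp
  have key: "(1 - \<zeta>m) * \<eta>s < \<eta>"
  proof (cases "\<eta> < \<eta>s")
    case True
    define b' where "b' = exp 1 / (real m * (1 - \<eta> / \<eta>s))"
    have q: "\<eta> / \<eta>s < 1" using True es_pos by simp
    have b'pos: "0 < b'" unfolding b'_def using q rm by simp
    have "ereal c < ereal (b' powr (1 / real m))"
      using cb True unfolding cbar_k_def b'_def m_def \<eta>s_def rk by simp
    hence "c < b' powr (1 / real m)" by simp
    hence "c ^ m < b'" by (rule powr_less_pow[OF cpos b'pos m1])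
    hence "real m * (1 - \<eta> / \<eta>s) * c ^ m < real m * (1 - \<eta> / \<eta>s) * b'"
      using q rm by (intro mult_strict_left_mono) auto
    also have "\<dots> = exp 1" unfolding b'_def using q rm True by simp
    finally have "(1 - \<eta> / \<eta>s) < \<zeta>m" unfolding \<zeta>m_def using rm cm
      by (simp add: divide_simps mult.commute mult.left_commute)
    hence "\<eta>s * (1 - \<eta> / \<eta>s) < \<eta>s * \<zeta>m" using es_pos by simp
    thus ?thesis using es_pos by (simp add: algebra_simps)
  next
    case False
    thus ?thesis using zmpos es_pos by (simp add: algebra_simps) (smt (verit) mult_pos_pos)
  qed
  define \<tau>1 where "\<tau>1 = 1 / real m"
  have t1pos: "0 < \<tau>1" unfolding \<tau>1_def using rm by simp
  define \<phi> where "\<phi> = (\<lambda>t. (1 - t * exp (real m * t) / c ^ m) * exp (- (real k * t)))"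
  have phi1: "\<phi> \<tau>1 = (1 - \<zeta>m) * \<eta>s"
  proof -
    have "\<tau>1 * exp (real m * \<tau>1) / c ^ m = \<zeta>m" unfolding \<tau>1_def \<zeta>m_def using rm by simp
    moreover have "exp (- (real k * \<tau>1)) = \<eta>s"
      unfolding \<tau>1_def \<eta>s_def eta_star_def m_def rk[symmetric] by simp
    ultimately show ?thesis unfolding \<phi>_def by simp
  qed
  have cm0: "c ^ m \<noteq> 0" using cm by linarith
  have "(\<phi> \<longlongrightarrow> \<phi> \<tau>1) (at_left \<tau>1)" unfolding \<phi>_def
    by (intro tendsto_intros cm0)
  hence "\<forall>\<^sub>F t in at_left \<tau>1. \<phi> t < \<eta>" using key phi1 by (intro order_tendstoD(2)) auto
  moreover have "\<forall>\<^sub>F t in at_left \<tau>1. t \<in> {0<..<\<tau>1}" using t1pos by (rule eventually_at_left_real)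
  ultimately have "\<forall>\<^sub>F t in at_left \<tau>1. \<phi> t < \<eta> \<and> t \<in> {0<..<\<tau>1}" by (rule eventually_conj)
  then obtain \<tau> where tau: "\<phi> \<tau> < \<eta>" "0 < \<tau>" "\<tau> < \<tau>1"
    using eventually_happens[of _ "at_left \<tau>1"] trivial_limit_at_left_real by fastforce
  have mt: "real m * \<tau> < 1" using tau rm unfolding \<tau>1_def by (simp add: divide_simps mult.commute)
  have mt0: "0 < real m * \<tau>" using tau rm by simp
  define \<zeta>0 where "\<zeta>0 = \<tau> * exp (real m * \<tau>) / c ^ m"
  define y where "y = c * exp (- \<tau>)"
  have z0: "0 < \<zeta>0" unfolding \<zeta>0_def using tau cm by simp
  have "real m * \<tau> * exp (real m * \<tau>) < 1 * exp 1"
    using mt mt0 by (intro mult_strict_mono) auto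
  hence th0: "real (k - 1) * \<zeta>0 * c ^ (k - 1) < exp 1"
    unfolding \<zeta>0_def m_def[symmetric] using cm by (simp add: mult.assoc)
  have "\<zeta>0 < \<zeta>m"
  proof -
    have "real m * \<zeta>0 * c ^ m < exp 1" using th0 unfolding m_def by simp
    thus ?thesis unfolding \<zeta>m_def using rm cm by (simp add: divide_simps mult.commute mult.left_commute)
  qed
  hence z1: "\<zeta>0 \<le> 1" using zm1 eta by simp
  have ypos: "0 < y" unfolding y_def using cpos by simp
  have ym: "y ^ m = c ^ m * exp (- (real m * \<tau>))"
    unfolding y_def by (simp add: power_mult_distrib exp_of_nat_mult[symmetric])
  have yfix: "y = c * exp (- (\<zeta>0 * y ^ (k - 1)))"
  proof -
    have "\<zeta>0 * y ^ m = \<tau>" unfolding ym \<zeta>0_def using cm cpos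
      by (simp add: mult_exp_exp field_simps)
    thus ?thesis unfolding m_def y_def by simp
  qed
  have yk: "(1 - \<zeta>0) * y ^ k < \<eta> * c ^ k"
  proof -
    have "(1 - \<zeta>0) * y ^ k = c ^ k * \<phi> \<tau>"
      unfolding \<phi>_def y_def \<zeta>0_def by (simp add: power_mult_distrib exp_of_nat_mult[symmetric] algebra_simps)
    also have "\<dots> < c ^ k * \<eta>" using tau cpos by simp
    finally show ?thesis by (simp add: mult.commute)
  qed
  define r where "r = (\<lambda>n. real (mindeg (V n) (E n)) / real (maxdeg (V n) (E n)))"
  define Bn where "Bn = (\<lambda>n. Bdg k c \<zeta>0 (\<zeta>0 * (1 - r n) * c ^ (k - 1)))"
  have "(Bn \<longlongrightarrow> Bdg k c \<zeta>0 (\<zeta>0 * (1 - 1) * c ^ (k - 1))) sequentially"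
  proof -
    have ne: "1 - real (k - 1) * \<zeta>0 * c ^ (k - 1) / exp 1 \<noteq> 0" using th0 by (simp add: divide_simps)
    show ?thesis unfolding Bn_def Bdg_def using reg[folded r_def] ne by (intro tendsto_intros) auto
  qed
  hence "Bn \<longlonglongrightarrow> 0" by (simp add: Bdg_def)
  hence "(\<lambda>n. (1 - \<zeta>0) * (y * exp (Bn n)) ^ k) \<longlonglongrightarrow> (1 - \<zeta>0) * (y * exp 0) ^ k"
    by (intro tendsto_intros)
  hence "\<forall>\<^sub>F n in sequentially. (1 - \<zeta>0) * (y * exp (Bn n)) ^ k < \<eta> * c ^ k"
    using yk by (intro order_tendstoD(2)) auto
  hence ev: "\<forall>\<^sub>F n in sequentially. 0 < maxdeg (V n) (E n) \<and> (1 - \<zeta>0) * (y * exp (Bn n)) ^ k < \<eta> * c ^ k"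
    using ev_pos[OF lim] by (rule eventually_conj[rotated])
  show ?thesis
  proof (rule final[OF k2 cpos eta unif z0 z1 th0])
    show "\<forall>\<^sub>F n in sequentially. 0 < maxdeg (V n) (E n) \<and>
        (\<forall>x\<in>fixpoints (V n) (E n) c \<zeta>0. (1 - \<zeta>0) * (\<Sum>e\<in>E n. \<Prod>u\<in>e. x u) \<le> \<eta> * c ^ k * real (card (E n)))"
      using ev
    proof eventually_elim
      case (elim n)
      then interpret hg "V n" "E n" k c using hg_intro[OF unif k2 cpos] by blast
      have Dp: "0 < real D" using elim by simp
      have r0: "0 \<le> r n" unfolding r_def by simp
      have r1: "r n \<le> 1" unfolding r_def using mindeg_le_D Dp by (simp add: divide_simps)
      have rD: "r n * real D \<le> real (card {e\<in>E n. w \<in> e})" if "w \<in> V n" for w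
        unfolding r_def using mindeg_le[OF that] Dp by simp
      show ?case
      proof (intro conjI ballI)
        fix x assume x: "x \<in> fixpoints (V n) (E n) c \<zeta>0"
        have xX: "x = X \<zeta>0" using X_eq[OF _ th0 x] z0 by simp
        have bnd: "x u \<le> y * exp (Bn n)" if "u \<in> V n" for u
          using reg_bound[OF _ th0 ypos yfix r0 r1 rD that] z0 unfolding xX Bn_def by simp
        have "(\<Sum>e\<in>E n. \<Prod>u\<in>e. x u) \<le> real (card (E n)) * (y * exp (Bn n)) ^ k"
          using fp_bounds[OF x] bnd by (intro sum_prod_le) auto
        hence "(1 - \<zeta>0) * (\<Sum>e\<in>E n. \<Prod>u\<in>e. x u) \<le> (1 - \<zeta>0) * (real (card (E n)) * (y * exp (Bn n)) ^ k)"
          using z1 by (intro mult_left_mono) auto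
        also have "\<dots> = real (card (E n)) * ((1 - \<zeta>0) * (y * exp (Bn n)) ^ k)" by simp
        also have "\<dots> \<le> real (card (E n)) * (\<eta> * c ^ k)"
          using elim by (intro mult_left_mono) auto
        finally show "(1 - \<zeta>0) * (\<Sum>e\<in>E n. \<Prod>u\<in>e. x u) \<le> \<eta> * c ^ k * real (card (E n))"
          by (simp add: mult.commute)
      qed (use elim in auto)
    qed
  qed
qed


theorem mainTheorem9:
  fixes k :: nat and \<eta> c :: real and V :: "nat \<Rightarrow> 'a set" and E :: "nat \<Rightarrow> 'a set set"
  assumes "k \<ge> 2" and "0 \<le> \<eta>" and "\<eta> < 1" and "0 < c"
    and "asymp_tree_like k V E"
    and "c < c_k k \<eta> \<or> (approx_regular k V E \<and> ereal c < cbar_k k \<eta>)"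
  shows "\<exists>\<zeta> :: nat \<Rightarrow> real.
           (\<forall>\<^sub>F n in sequentially. 0 < \<zeta> n \<and> \<zeta> n \<le> 1) \<and>
           limsup (\<lambda>n. ereal (\<zeta> n * (real k - 1) * c ^ (k - 1))) < ereal (exp 1) \<and>
           (\<forall>\<^sub>F n in sequentially. \<exists>!x. x \<in> fixpoints (V n) (E n) c (\<zeta> n)) \<and>
           (\<exists>\<epsilon> :: nat \<Rightarrow> real. \<epsilon> \<longlonglongrightarrow> 0 \<and>
              (\<forall>\<^sub>F n in sequentially. \<forall>x \<in> fixpoints (V n) (E n) c (\<zeta> n).
                 (1 - \<zeta> n) * (\<Sum>e\<in>E n. \<Prod>u\<in>e. x u)
                   = (1 + \<epsilon> n) * (\<eta> * c ^ k * real (card (E n)))))"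
proof -
  have unif: "\<And>n. uniform_hypergraph k (V n) (E n)"
    and lim: "filterlim (\<lambda>n. real (maxdeg (V n) (E n))) at_top sequentially"
    using assms(5) unfolding asymp_tree_like_def by auto
  show ?thesis
  proof (cases "c < c_k k \<eta>")
    case True
    show ?thesis by (rule caseA[OF assms(1) assms(4) assms(2) assms(3) unif lim True])
  next
    case False
    with assms(6) have ar: "approx_regular k V E" and cb: "ereal c < cbar_k k \<eta>" by auto
    from ar have reg: "(\<lambda>n. real (mindeg (V n) (E n)) / real (maxdeg (V n) (E n))) \<longlonglongrightarrow> 1"
      unfolding approx_regular_def by auto
    show ?thesis by (rule caseB[OF assms(1) assms(4) assms(2) assms(3) unif lim reg False cb])
  qed
qed

end
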